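(* Let $X$ be an amoebot structure with $n$ amoebots forming a line (a straight segment of consecutive grid nodes along one axis), and let $S\subseteq X$ be non-empty, each amoebot knowing whether it belongs to $S$. There is an algorithm in the reconfigurable circuit model (the line algorithm) that computes an $S$-shortest path forest within $O(\log n)$ rounds.
   Context: Geometric amoebot model with reconfigurable circuits: $G_\Delta$ is the infinite regular triangular grid graph; an amoebot structure is a finite set $X$ of grid nodes, each occupied by an anonymous constant-memory amoebot, with $G_X=(X,E_X)$ the induced (connected) subgraph. Each edge of $G_X$ is replaced by a constant number of external links with pins at both endpoints (labeling agreed by neighbors); each amoebot partitions its pins into partition sets; circuits are connected components of the graph on all partition sets joined by external links. In synchronous rounds every amoebot may update its state, change its partition and beep on partition sets; beeps are received at the start of the next round by all partition sets of the same circuit (without sender identity or count). Amoebots share compass orientation and chirality. An $S$-shortest path forest is a family of rooted trees $T_s=(V_s,E_s)$, $s\in S$, $V_s\subseteq X$, $E_s\subseteq E_X$, rooted at $s$, with pairwise disjoint $V_s$ covering $X$, such that for every $u\in V_s$ the tree path from $s$ to $u$ is a shortest path in $G_X$ and $s$ is a closest amoebot of $S$ to $u$; computing it means every amoebot not in $S$ knows its parent. *)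

theory Defs
  imports Complex_Main
begin

text \<open>Grid nodes of the infinite regular triangular grid in axial coordinates.\<close>
type_synonym node = "int \<times> int"

text \<open>The six compass directions (shared by all amoebots).\<close>
datatype dir = E | NE | NW | W | SW | SE

fun dvec :: "dir \<Rightarrow> int \<times> int" where
  "dvec E = (1, 0)" | "dvec NE = (0, 1)" | "dvec NW = (-1, 1)"
| "dvec W = (-1, 0)" | "dvec SW = (0, -1)" | "dvec SE = (1, -1)"

fun opp :: "dir \<Rightarrow> dir" where
  "opp E = W" | "opp NE = SW" | "opp NW = SE"
| "opp W = E" | "opp SW = NE" | "opp SE = NW"

definition mv :: "node \<Rightarrow> dir \<Rightarrow> node" where
  "mv u d = (fst u + fst (dvec d), snd u + snd (dvec d))"

definition grid_adj :: "node \<Rightarrow> node \<Rightarrow> bool" where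
  "grid_adj u v \<longleftrightarrow> (\<exists>d. v = mv u d)"

definition walk :: "node set \<Rightarrow> node list \<Rightarrow> bool" where
  "walk X xs \<longleftrightarrow> xs \<noteq> [] \<and> set xs \<subseteq> X \<and>
     (\<forall>i. Suc i < length xs \<longrightarrow> grid_adj (xs ! i) (xs ! Suc i))"

definition amoebot_structure :: "node set \<Rightarrow> bool" where
  "amoebot_structure X \<longleftrightarrow> finite X \<and> X \<noteq> {} \<and>
     (\<forall>u\<in>X. \<forall>v\<in>X. \<exists>xs. walk X xs \<and> hd xs = u \<and> last xs = v)"

definition edgesX :: "node set \<Rightarrow> node set set" where
  "edgesX X = {{u, v} | u v. u \<in> X \<and> v \<in> X \<and> grid_adj u v}"

definition gdist :: "node set \<Rightarrow> node \<Rightarrow> node \<Rightarrow> nat" where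
  "gdist X u v = (LEAST k. \<exists>xs. walk X xs \<and> hd xs = u \<and> last xs = v \<and> length xs = Suc k)"

definition is_line :: "node set \<Rightarrow> nat \<Rightarrow> bool" where
  "is_line X n \<longleftrightarrow> n \<ge> 1 \<and> (\<exists>p d. X = {(fst p + int k * fst (dvec d), snd p + int k * snd (dvec d)) | k. k < n})"

definition epath :: "node set set \<Rightarrow> node list \<Rightarrow> bool" where
  "epath F xs \<longleftrightarrow> xs \<noteq> [] \<and> (\<forall>i. Suc i < length xs \<longrightarrow> {xs ! i, xs ! Suc i} \<in> F)"

definition tpath :: "node set set \<Rightarrow> node \<Rightarrow> node \<Rightarrow> node list \<Rightarrow> bool" where
  "tpath F u v xs \<longleftrightarrow> epath F xs \<and> distinct xs \<and> hd xs = u \<and> last xs = v"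

definition is_tree :: "node set \<Rightarrow> node set set \<Rightarrow> bool" where
  "is_tree V F \<longleftrightarrow> V \<noteq> {} \<and> (\<forall>e\<in>F. \<exists>a b. e = {a, b} \<and> a \<noteq> b \<and> a \<in> V \<and> b \<in> V) \<and>
     (\<forall>u\<in>V. \<forall>v\<in>V. \<exists>!xs. tpath F u v xs)"

definition spf :: "node set \<Rightarrow> node set \<Rightarrow> (node \<Rightarrow> node set) \<Rightarrow> (node \<Rightarrow> node set set) \<Rightarrow> bool" where
  "spf X S V F \<longleftrightarrow>
     (\<forall>s\<in>S. is_tree (V s) (F s) \<and> s \<in> V s \<and> V s \<subseteq> X \<and> F s \<subseteq> edgesX X) \<and>
     (\<forall>s\<in>S. \<forall>s'\<in>S. s \<noteq> s' \<longrightarrow> V s \<inter> V s' = {}) \<and>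
     (\<Union>s\<in>S. V s) = X \<and>
     (\<forall>s\<in>S. \<forall>u\<in>V s. \<forall>xs. tpath (F s) s u xs \<longrightarrow> length xs = Suc (gdist X s u)) \<and>
     (\<forall>s\<in>S. \<forall>u\<in>V s. \<forall>s'\<in>S. gdist X s u \<le> gdist X s' u)"

text \<open>The parent pointers (given as compass directions) of all amoebots not in S
  are the parents in some S-shortest path forest (rooted at the elements of S).\<close>
definition computes_spf :: "node set \<Rightarrow> node set \<Rightarrow> (node \<Rightarrow> dir option) \<Rightarrow> bool" where
  "computes_spf X S par \<longleftrightarrow> (\<exists>V F. spf X S V F \<and>
     (\<forall>s\<in>S. \<forall>u\<in>V s - S. \<exists>d ys. par u = Some d \<and> tpath (F s) s u (ys @ [mv u d, u])))"

text \<open>A (uniform, deterministic) algorithm for anonymous constant-memory amoebots.  Each amoebot has, for every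
  direction d and every j < pins, one pin (d, j) (only pins towards occupied neighbours
  carry external links).  The partition of the pins is given by labelling each pin with
  the name of its partition set.  Pin (d,j) of u is linked to pin (opp d, j) of the
  neighbour in direction d (the labelling agreed on by the neighbours).\<close>
record alg =
  pins :: nat
  nstates :: nat
  init :: "bool \<Rightarrow> dir set \<Rightarrow> nat"        \<comment> \<open>in S?, occupied neighbour directions\<close>
  part :: "nat \<Rightarrow> dir \<Rightarrow> nat \<Rightarrow> nat"      \<comment> \<open>state, pin \<Rightarrow> partition set label\<close>
  beep :: "nat \<Rightarrow> nat set"                 \<comment> \<open>partition sets beeped on\<close>
  delta :: "nat \<Rightarrow> nat set \<Rightarrow> nat"         \<comment> \<open>state, partition sets that received a beep\<close>
  parent :: "nat \<Rightarrow> dir option"             \<comment> \<open>output: parent direction\<close>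

definition valid_alg :: "alg \<Rightarrow> bool" where
  "valid_alg A \<longleftrightarrow> (\<forall>b D. init A b D < nstates A) \<and>
     (\<forall>s R. s < nstates A \<longrightarrow> delta A s R < nstates A)"

text \<open>External links between partition sets (amoebot, label) in configuration \<sigma>.\<close>
definition link :: "alg \<Rightarrow> node set \<Rightarrow> (node \<Rightarrow> nat) \<Rightarrow> node \<times> nat \<Rightarrow> node \<times> nat \<Rightarrow> bool" where
  "link A X \<sigma> p q \<longleftrightarrow> fst p \<in> X \<and> (\<exists>d j. j < pins A \<and> fst q = mv (fst p) d \<and> fst q \<in> X \<and>
      snd p = part A (\<sigma> (fst p)) d j \<and> snd q = part A (\<sigma> (fst q)) (opp d) j)"

definition recv :: "alg \<Rightarrow> node set \<Rightarrow> (node \<Rightarrow> nat) \<Rightarrow> node \<Rightarrow> nat set" where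
  "recv A X \<sigma> u = {l. \<exists>w l'. w \<in> X \<and> l' \<in> beep A (\<sigma> w) \<and> (link A X \<sigma>)\<^sup>*\<^sup>* (u, l) (w, l')}"

definition occ :: "node set \<Rightarrow> node \<Rightarrow> dir set" where
  "occ X u = {d. mv u d \<in> X}"

fun run :: "alg \<Rightarrow> node set \<Rightarrow> node set \<Rightarrow> nat \<Rightarrow> node \<Rightarrow> nat" where
  "run A X S 0 = (\<lambda>u. init A (u \<in> S) (occ X u))"
| "run A X S (Suc t) = (\<lambda>u. delta A (run A X S t u) (recv A X (run A X S t) u))"

end

theory Submission
  imports Defs
begin
fun dix :: "dir \<Rightarrow> nat" where
  "dix E = 0" | "dix NE = 1" | "dix NW = 2" | "dix W = 3" | "dix SW = 4" | "dix SE = 5"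

fun gq :: "dir \<Rightarrow> nat" where
  "gq E = 0" | "gq NE = 0" | "gq NW = 0" | "gq W = 1" | "gq SW = 1" | "gq SE = 1"

definition dl :: "dir list" where "dl = [E,NE,NW,W,SW,SE]"

definition enc :: "bool \<Rightarrow> (dir \<Rightarrow> bool) \<Rightarrow> (dir \<Rightarrow> bool) \<Rightarrow> (dir \<Rightarrow> bool) \<Rightarrow> nat" where
  "enc b ac hs cm = horner_sum of_bool 2 (b # map ac dl @ map hs dl @ map cm dl)"

definition stS :: "nat \<Rightarrow> bool" where "stS s = bit s 0"
definition stA :: "nat \<Rightarrow> dir \<Rightarrow> bool" where "stA s e = bit s (1 + dix e)"
definition stH :: "nat \<Rightarrow> dir \<Rightarrow> bool" where "stH s e = bit s (7 + dix e)"
definition stC :: "nat \<Rightarrow> dir \<Rightarrow> bool" where "stC s e = bit s (13 + dix e)"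

lemma bitn: "bit (horner_sum of_bool (2::nat) bs) n = (n < length bs \<and> bs ! n)"
  by (simp add: bit_horner_sum_bit_iff possible_bit_def)
lemma dl_nth: "dl ! dix e = e" by (cases e) (simp_all add: dl_def)
lemma dix_less: "dix e < 6" by (cases e) simp_all
lemma len_dl[simp]: "length dl = 6" by (simp add: dl_def)

lemma enc_S[simp]: "stS (enc b ac hs cm) = b"
  unfolding stS_def enc_def bitn by simp
lemma enc_A[simp]: "stA (enc b ac hs cm) e = ac e"
  unfolding stA_def enc_def bitn using dix_less[of e] by (simp add: nth_append dl_nth)
lemma enc_H[simp]: "stH (enc b ac hs cm) e = hs e"
  unfolding stH_def enc_def bitn using dix_less[of e] by (simp add: nth_append dl_nth)
lemma enc_C[simp]: "stC (enc b ac hs cm) e = cm e"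
  unfolding stC_def enc_def bitn using dix_less[of e] by (simp add: nth_append dl_nth)

lemma horner_less: "horner_sum of_bool (2::nat) bs < 2 ^ length bs"
  by (induction bs) auto

lemma enc_less: "enc b ac hs cm < 2^19"
  using horner_less[of "b # map ac dl @ map hs dl @ map cm dl"] by (simp add: enc_def dl_def)

definition sysof :: "dir \<Rightarrow> nat \<Rightarrow> dir" where
  "sysof e j = (if j div 2 = gq e then e else opp e)"

definition prt :: "nat \<Rightarrow> dir \<Rightarrow> nat \<Rightarrow> nat" where
  "prt s e j = (if stS s then 4 * dix e + j
     else if j div 2 = gq e then 2 * dix e + of_bool (odd j \<noteq> stA s e)
     else 2 * dix (opp e) + j mod 2)"

definition bp :: "nat \<Rightarrow> nat set" where
  "bp s = (if stS s then {4 * dix e + 2 * gq e | e. True} else {})"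

definition rxv :: "nat set \<Rightarrow> dir \<Rightarrow> bool" where
  "rxv R e = (2 * dix e \<in> R \<or> 2 * dix e + 1 \<in> R)"
definition xv :: "nat set \<Rightarrow> dir \<Rightarrow> bool" where
  "xv R e = (2 * dix e + 1 \<in> R)"
definition bitv :: "nat \<Rightarrow> nat set \<Rightarrow> dir \<Rightarrow> bool" where
  "bitv s R e = (xv R e \<noteq> stA s e)"

definition dlt :: "nat \<Rightarrow> nat set \<Rightarrow> nat" where
  "dlt s R = (if stS s then s else
     enc False (\<lambda>e. if rxv R e then stA s e \<and> \<not> bitv s R e else stA s e) (rxv R)
       (\<lambda>e. if rxv R e \<and> rxv R (opp e) \<and> bitv s R e \<noteq> bitv s R (opp e) then bitv s R (opp e) else stC s e))"

definition ini :: "bool \<Rightarrow> dir set \<Rightarrow> nat" where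
  "ini b D = enc b (\<lambda>_. True) (\<lambda>_. False) (\<lambda>_. True)"

definition par :: "nat \<Rightarrow> dir option" where
  "par s = (if stS s then None else
     (case find (\<lambda>e. stH s e \<and> (\<not> stH s (opp e) \<or> stC s e)) dl of None \<Rightarrow> None | Some e \<Rightarrow> Some (opp e)))"

definition ALG :: alg where
  "ALG = \<lparr>pins = 4, nstates = 2^19, init = ini, part = prt, beep = bp, delta = dlt, parent = par\<rparr>"

lemma ALG_simps[simp]: "pins ALG = 4" "nstates ALG = 2^19" "init ALG = ini" "part ALG = prt"
  "beep ALG = bp" "delta ALG = dlt" "parent ALG = par"
  by (simp_all add: ALG_def)

lemma valid_ALG: "valid_alg ALG"
  using enc_less[simplified] by (simp add: valid_alg_def ini_def dlt_def)

definition bk :: "dir \<Rightarrow> node \<Rightarrow> nat \<Rightarrow> node" where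
  "bk e u a = (fst u - int a * fst (dvec e), snd u - int a * snd (dvec e))"

lemma dvec_opp: "dvec (opp e) = (- fst (dvec e), - snd (dvec e))"
  by (cases e) auto

lemma opp_opp[simp]: "opp (opp e) = e" by (cases e) auto
lemma opp_neq[simp]: "opp e \<noteq> e" by (cases e) auto
lemma opp_neq'[simp]: "e \<noteq> opp e" by (cases e) auto
lemma opp_inj[simp]: "(opp e = opp e') = (e = e')" by (metis opp_opp)
lemma gq_opp: "gq (opp e) = 1 - gq e" by (cases e) auto
lemma gq_le: "gq e \<le> 1" by (cases e) auto
lemma dix_inj[simp]: "(dix e = dix e') = (e = e')" by (cases e; cases e') auto

lemma mv_opp[simp]: "mv (mv u e) (opp e) = u"
  by (simp add: mv_def dvec_opp)

lemma bk_0[simp]: "bk e u 0 = u" by (simp add: bk_def)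
lemma bk_mv_Suc[simp]: "bk e (mv w e) (Suc a) = bk e w a"
  by (simp add: bk_def mv_def algebra_simps)
lemma bk_1: "bk e w (Suc 0) = mv w (opp e)"
  by (simp add: bk_def mv_def dvec_opp)
lemma bk_Suc: "bk e w (Suc a) = bk e (mv w (opp e)) a"
  by (simp add: bk_def mv_def dvec_opp algebra_simps)

definition dS :: "node set \<Rightarrow> dir \<Rightarrow> node \<Rightarrow> nat option" where
  "dS S e u = (if \<exists>a>0. bk e u a \<in> S then Some (LEAST a. 0 < a \<and> bk e u a \<in> S) else None)"

lemma dS_Some_iff: "dS S e u = Some a \<longleftrightarrow>
   (0 < a \<and> bk e u a \<in> S \<and> (\<forall>a'. 0 < a' \<longrightarrow> a' < a \<longrightarrow> bk e u a' \<notin> S))"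
proof
  assume h: "dS S e u = Some a"
  then have ex: "\<exists>a>0. bk e u a \<in> S" and aa: "a = (LEAST a. 0 < a \<and> bk e u a \<in> S)"
    by (auto simp: dS_def split: if_splits)
  from ex have "0 < a \<and> bk e u a \<in> S" unfolding aa by (metis (mono_tags, lifting) LeastI)
  moreover have "\<forall>a'. 0 < a' \<longrightarrow> a' < a \<longrightarrow> bk e u a' \<notin> S"
    using aa not_less_Least by blast
  ultimately show "0 < a \<and> bk e u a \<in> S \<and> (\<forall>a'. 0 < a' \<longrightarrow> a' < a \<longrightarrow> bk e u a' \<notin> S)" by blast
next
  assume h: "0 < a \<and> bk e u a \<in> S \<and> (\<forall>a'. 0 < a' \<longrightarrow> a' < a \<longrightarrow> bk e u a' \<notin> S)"
  have "(LEAST a. 0 < a \<and> bk e u a \<in> S) = a"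
  proof (rule Least_equality)
    show "0 < a \<and> bk e u a \<in> S" using h by blast
  next
    fix y assume "0 < y \<and> bk e u y \<in> S" then show "a \<le> y" using h by (meson not_less)
  qed
  with h show "dS S e u = Some a" by (auto simp: dS_def)
qed

lemma dS_None_iff: "dS S e u = None \<longleftrightarrow> (\<forall>a>0. bk e u a \<notin> S)"
proof -
  have "dS S e u = None \<longleftrightarrow> \<not> (\<exists>a>0. bk e u a \<in> S)" unfolding dS_def by simp
  then show ?thesis by blast
qed

lemma dS_rec: "dS S e (mv w e) = (if w \<in> S then Some 1 else map_option Suc (dS S e w))"
proof (cases "w \<in> S")
  case True
  then show ?thesis by (simp add: dS_Some_iff bk_1[symmetric])
next
  case False
  show ?thesis
  proof (cases "dS S e w")
    case None
    have "\<forall>a>0. bk e (mv w e) a \<notin> S"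
    proof (intro allI impI)
      fix a :: nat assume "0 < a" then obtain m where m: "a = Suc m" using gr0_conv_Suc by blast
      show "bk e (mv w e) a \<notin> S" using None False unfolding m by (cases m) (auto simp: dS_None_iff)
    qed
    then have "dS S e (mv w e) = None" by (simp add: dS_None_iff)
    with None False show ?thesis by simp
  next
    case (Some a)
    then have "0 < Suc a \<and> bk e (mv w e) (Suc a) \<in> S \<and> (\<forall>a'. 0 < a' \<longrightarrow> a' < Suc a \<longrightarrow> bk e (mv w e) a' \<notin> S)"
      using False unfolding dS_Some_iff
      by (auto simp: gr0_conv_Suc) (metis bk_0 bk_mv_Suc gr0I less_Suc_eq_0_disj)
    then have "dS S e (mv w e) = Some (Suc a)" using dS_Some_iff by blast
    with Some False show ?thesis by simp
  qed
qed

definition Est :: "node set \<Rightarrow> nat \<Rightarrow> node \<Rightarrow> nat" where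
  "Est S J u = (if u \<in> S then ini True {} else
     enc False (\<lambda>e. case dS S e u of None \<Rightarrow> True | Some a \<Rightarrow> 2^J dvd a)
       (\<lambda>e. 0 < J \<and> dS S e u \<noteq> None)
       (\<lambda>e. case (dS S e u, dS S (opp e) u) of (Some a, Some b) \<Rightarrow> a mod 2^J \<le> b mod 2^J | _ \<Rightarrow> True))"

lemma Est_S: "stS (Est S J u) = (u \<in> S)"
  by (simp add: Est_def ini_def)
lemma Est_A: "u \<notin> S \<Longrightarrow> stA (Est S J u) e = (case dS S e u of None \<Rightarrow> True | Some a \<Rightarrow> 2^J dvd a)"
  by (simp add: Est_def)

lemma div_pred: "0 < a \<Longrightarrow> a div m = (a - 1) div m + of_bool (m dvd a \<and> m \<noteq> 0)" for a m :: nat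
  by (cases a) (auto simp: div_Suc dvd_eq_mod_eq_0)

lemma par_ident: "0 < a \<Longrightarrow> y < 2 \<Longrightarrow>
  (a div 2^J + y) mod 2 = ((a - 1) div 2^J + of_bool (odd y \<noteq> (2^J dvd a))) mod 2" for a y J :: nat
proof -
  assume a: "0 < a" and y: "y < 2"
  obtain q where q: "a div 2^J = q + of_bool (2^J dvd a)" "(a-1) div 2^J = q"
    using div_pred[OF a, of "2^J"] by simp
  have m2: "(q + 1 + 1) mod 2 = q mod 2" by presburger
  have "y = 0 \<or> y = 1" using y by auto
  moreover have ?thesis if "y = 0" unfolding q using that by simp
  moreover have ?thesis if "y = 1" unfolding q using that m2 by (cases "2^J dvd a") simp_all
  ultimately show ?thesis by blast
qed

definition psi :: "node set \<Rightarrow> nat \<Rightarrow> dir \<Rightarrow> node \<Rightarrow> nat \<Rightarrow> (node \<times> nat) option" where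
  "psi S J d w y = (case dS S d (mv w d) of None \<Rightarrow> None
      | Some a \<Rightarrow> Some (bk d (mv w d) a, ((a - 1) div 2^J + y) mod 2))"

definition Psi :: "node set \<Rightarrow> nat \<Rightarrow> dir \<Rightarrow> node \<Rightarrow> dir \<Rightarrow> nat \<Rightarrow> (node \<times> nat) option option" where
  "Psi S J d w e j = (if sysof e j = d then
      Some (if e = d then psi S J d w (j mod 2) else psi S J d (mv w (opp d)) (j mod 2)) else None)"

definition Phi :: "node set \<Rightarrow> nat \<Rightarrow> dir \<Rightarrow> node \<times> nat \<Rightarrow> (node \<times> nat) option option" where
  "Phi S J d p = (let w = fst p; l = snd p in
     if w \<in> S then
       (if l div 4 = dix d \<and> l mod 4 div 2 = gq d then Some (psi S J d w (l mod 2))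
        else if l div 4 = dix (opp d) \<and> l mod 4 div 2 = gq d then Some (psi S J d (mv w (opp d)) (l mod 2))
        else None)
     else (if l div 2 = dix d then Some (psi S J d (mv w (opp d)) (l mod 2)) else None))"

lemma mv_opp'[simp]: "mv (mv u (opp e)) e = u"
  using mv_opp[of u "opp e"] by simp

lemma psi_nonS:
  assumes "w \<notin> S" "y < 2"
  shows "psi S J d w y = psi S J d (mv w (opp d))
           (of_bool (odd y \<noteq> (case dS S d w of None \<Rightarrow> True | Some a \<Rightarrow> 2^J dvd a)))"
proof (cases "dS S d w")
  case None
  then show ?thesis using assms by (simp add: psi_def dS_rec)
next
  case (Some a)
  then have "0 < a" by (simp add: dS_Some_iff)
  then show ?thesis using assms Some par_ident[of a y J]
    by (simp add: psi_def dS_rec)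
qed

lemma psi_S: "w \<in> S \<Longrightarrow> psi S J d w y = Some (w, y mod 2)"
  by (simp add: psi_def dS_rec bk_mv_Suc[of d w 0, simplified])

lemma sysof_cases: "sysof e j = e \<or> sysof e j = opp e"
  by (simp add: sysof_def)

lemma jdiv: "j < 4 \<Longrightarrow> j div 2 \<le> 1" for j :: nat by auto

lemma gq_opp_ne: "gq (opp e) \<noteq> gq e" by (cases e) auto

lemma gq2: "j < 4 \<Longrightarrow> (j div 2 = gq (opp e)) = (j div 2 \<noteq> gq e)"
  using jdiv[of j] by (cases e) auto

lemma sysof_opp: "j < 4 \<Longrightarrow> sysof (opp e) j = sysof e j"
  by (auto simp: sysof_def gq2)

lemma gq_ne: "j < 4 \<Longrightarrow> j div 2 = gq e \<longleftrightarrow> j div 2 \<noteq> gq (opp e)"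
  by (simp add: gq2)

lemma modq: "(q + x) mod 2 = 0 \<Longrightarrow> x < 2 \<Longrightarrow> x = q mod (2::nat)" by presburger

lemma Phi_part:
  assumes "\<sigma> w = Est S J w" "j < 4"
  shows "Phi S J d (w, prt (\<sigma> w) e j) = Psi S J d w e j"
proof (cases "w \<in> S")
  case True
  define l where "l = prt (\<sigma> w) e j"
  have p: "l = 4 * dix e + j" using assms True by (simp add: l_def prt_def Est_S)
  have m2: "l mod 2 = j mod 2" unfolding p by presburger
  have m4: "l mod 4 = j" "l div 4 = dix e" using assms(2) unfolding p by auto
  have c: "e = d \<or> e = opp d \<or> (e \<noteq> d \<and> e \<noteq> opp d)" by blast
  have go: "j div 2 = gq d \<longleftrightarrow> j div 2 \<noteq> gq (opp d)" using gq_ne[OF assms(2)] .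
  from c have "Phi S J d (w, l) = Psi S J d w e j"
  proof (elim disjE)
    assume ed: "e = d" show ?thesis unfolding Phi_def Psi_def using True
      by (simp add: m2 m4 sysof_def Let_def ed)
  next
    assume ed: "e = opp d" show ?thesis unfolding Phi_def Psi_def using True go
      by (simp add: m2 m4 sysof_def Let_def ed)
  next
    assume ne: "e \<noteq> d \<and> e \<noteq> opp d"
    then have "sysof e j \<noteq> d" using sysof_cases[of e j] by auto
    moreover have "dix e \<noteq> dix d" "dix e \<noteq> dix (opp d)" using ne by auto
    ultimately show ?thesis unfolding Phi_def Psi_def using True
      by (simp add: m2 m4 Let_def)
  qed
  then show ?thesis by (simp add: l_def)
next
  case False
  note st = Est_S[of S J w] Est_A[OF False, of J]
  show ?thesis
  proof (cases "j div 2 = gq e")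
    case True
    have p: "prt (\<sigma> w) e j = 2 * dix e + of_bool (odd j \<noteq> stA (\<sigma> w) e)"
      using assms False True by (simp add: prt_def Est_S)
    have s: "sysof e j = e" using True by (simp add: sysof_def)
    show ?thesis
    proof (cases "e = d")
      case True
      have "odd j = odd (j mod 2)" by simp
      then show ?thesis unfolding p Phi_def Psi_def using False s True assms
        psi_nonS[OF False, of "j mod 2" J d] by (simp add: Est_A)
    next
      case ne: False
      then show ?thesis unfolding p Phi_def Psi_def using False s by simp
    qed
  next
    case nT: False
    have p: "prt (\<sigma> w) e j = 2 * dix (opp e) + j mod 2"
      using assms False nT by (simp add: prt_def Est_S)
    have s: "sysof e j = opp e" using nT by (simp add: sysof_def)
    show ?thesis unfolding p Phi_def Psi_def using False s
      by (cases "e = opp d") auto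
  qed
qed

lemma Psi_sym: "j < 4 \<Longrightarrow> Psi S J d u e j = Psi S J d (mv u e) (opp e) j"
  using sysof_cases[of e j]
  by (cases "e = d"; cases "e = opp d") (auto simp: Psi_def sysof_opp)

lemma Phi_link:
  assumes HX: "\<forall>w\<in>X. \<sigma> w = Est S J w" and l: "link ALG X \<sigma> p q"
  shows "Phi S J d p = Phi S J d q"
proof -
  obtain e j where ej: "fst p \<in> X" "j < 4" "fst q = mv (fst p) e" "fst q \<in> X"
    "snd p = prt (\<sigma> (fst p)) e j" "snd q = prt (\<sigma> (fst q)) (opp e) j"
    using l unfolding link_def by auto
  have "Phi S J d p = Psi S J d (fst p) e j"
    using Phi_part[of \<sigma> "fst p" S J j d e] HX ej by (metis prod.collapse)
  moreover have "Phi S J d q = Psi S J d (fst q) (opp e) j"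
    using Phi_part[of \<sigma> "fst q" S J j d "opp e"] HX ej by (metis prod.collapse)
  ultimately show ?thesis using Psi_sym[OF ej(2)] ej(3) by simp
qed

lemma Phi_rtrancl:
  assumes HX: "\<forall>w\<in>X. \<sigma> w = Est S J w" and "(link ALG X \<sigma>)\<^sup>*\<^sup>* p q"
  shows "Phi S J d p = Phi S J d q"
  using assms(2) by (induction rule: rtranclp_induct) (auto dest: Phi_link[OF HX])

lemma bit_ident: "0 < a \<Longrightarrow>
  of_bool (odd ((a div 2^J) mod 2) \<noteq> (2^J dvd a)) = ((a - 1) div 2^J) mod (2::nat)"
proof -
  assume a: "0 < a"
  obtain q where q: "a div 2^J = q + of_bool (2^J dvd a)" "(a-1) div 2^J = q"
    using div_pred[OF a, of "2^J"] by simp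
  show ?thesis unfolding q by (cases "2^J dvd a") (auto simp: odd_iff_mod_2_eq_one)
qed

lemma chain:
  assumes HX: "\<forall>w\<in>X. \<sigma> w = Est S J w" and SX: "S \<subseteq> X"
    and CV: "\<forall>u\<in>X. \<forall>a k. bk d u a \<in> X \<longrightarrow> k \<le> a \<longrightarrow> bk d u k \<in> X"
  shows "w \<in> X \<Longrightarrow> w \<notin> S \<Longrightarrow> dS S d w = Some a \<Longrightarrow>
     (link ALG X \<sigma>)\<^sup>*\<^sup>* (w, 2 * dix d + ((a - 1) div 2^J) mod 2) (bk d w a, 4 * dix d + 2 * gq d)"
proof (induction a arbitrary: w)
  case 0
  then show ?case by (simp add: dS_Some_iff)
next
  case (Suc a)
  define w' where "w' = mv w (opp d)"
  have b1: "bk d w 1 = w'" by (simp add: w'_def bk_1)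
  have wS: "bk d w (Suc a) \<in> S" using Suc.prems by (simp add: dS_Some_iff)
  have w'X: "w' \<in> X" using CV Suc.prems wS SX b1 by (metis One_nat_def Suc_le_mono le0 subsetD)
  have gqo: "2 * gq d div 2 \<noteq> gq (opp d)" using gq_opp_ne[of d] by simp
  show ?case
  proof (cases "a = 0")
    case True
    have w'S: "w' \<in> S" using wS True b1 by simp
    have "link ALG X \<sigma> (w, 2 * dix d) (w', 4 * dix d + 2 * gq d)"
      unfolding link_def
      apply (simp add: Suc.prems(1) w'X)
      apply (rule exI[of _ "opp d"], rule exI[of _ "2 * gq d"])
      using gq_le[of d] HX Suc.prems w'S w'X gqo
      by (auto simp: w'_def prt_def Est_S)
    then show ?thesis using True b1 by simp
  next
    case False
    have w'nS: "w' \<notin> S" using Suc.prems False b1 unfolding dS_Some_iff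
      by (metis One_nat_def Suc_lessI less_Suc_eq zero_less_one)
    have ww: "w = mv w' d" by (simp add: w'_def)
    have dw': "dS S d w' = Some a"
      using Suc.prems(3) dS_rec[of S d w'] w'nS ww by auto
    have IH: "(link ALG X \<sigma>)\<^sup>*\<^sup>* (w', 2 * dix d + ((a - 1) div 2^J) mod 2) (bk d w (Suc a), 4 * dix d + 2 * gq d)"
      using Suc.IH[OF w'X w'nS dw'] by (simp add: bk_Suc w'_def)
    define x where "x = (a div 2^J) mod 2"
    have x2: "x < 2" by (simp add: x_def)
    have a0: "0 < a" using False by simp
    have act: "stA (\<sigma> w') d = (2^J dvd a)" using HX w'X w'nS dw' by (simp add: Est_A)
    have lab': "prt (\<sigma> w') d (2 * gq d + x) = 2 * dix d + ((a - 1) div 2^J) mod 2"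
    proof -
      have "odd (2 * gq d + x) = odd x" by simp
      then show ?thesis using HX w'X w'nS act bit_ident[OF a0, of J]
        by (simp add: prt_def Est_S x_def)
    qed
    have lab: "prt (\<sigma> w) (opp d) (2 * gq d + x) = 2 * dix d + x"
    proof -
      have "(2 * gq d + x) div 2 = gq d" using x2 by simp
      moreover have "(2 * gq d + x) mod 2 = x" using x2 by simp
      moreover have "gq d \<noteq> gq (opp d)" using gq_opp_ne[of d] by simp
      ultimately show ?thesis using HX Suc.prems
        by (simp add: prt_def Est_S)
    qed
    have "link ALG X \<sigma> (w, 2 * dix d + x) (w', 2 * dix d + ((a - 1) div 2^J) mod 2)"
      unfolding link_def
      apply (simp add: Suc.prems(1) w'X)
      apply (rule exI[of _ "opp d"], rule exI[of _ "2 * gq d + x"])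
      using gq_le[of d] x2 lab lab' by (auto simp: w'_def)
    then show ?thesis using IH unfolding x_def by (simp add: converse_rtranclp_into_rtranclp)
  qed
qed

lemma recv_sys:
  assumes HX: "\<forall>w\<in>X. \<sigma> w = Est S J w" and SX: "S \<subseteq> X"
    and CV: "\<forall>u\<in>X. \<forall>a k. bk d u a \<in> X \<longrightarrow> k \<le> a \<longrightarrow> bk d u k \<in> X"
    and u: "u \<in> X" "u \<notin> S" and x: "x < 2"
  shows "(2 * dix d + x \<in> recv ALG X \<sigma> u) \<longleftrightarrow> (\<exists>a. dS S d u = Some a \<and> x = ((a - 1) div 2^J) mod 2)"
proof
  assume "2 * dix d + x \<in> recv ALG X \<sigma> u"
  then obtain w l' where w: "w \<in> X" "l' \<in> bp (\<sigma> w)" "(link ALG X \<sigma>)\<^sup>*\<^sup>* (u, 2 * dix d + x) (w, l')"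
    unfolding recv_def by auto
  have wS: "w \<in> S" and ex: "\<exists>e. l' = 4 * dix e + 2 * gq e"
    using w HX by (auto simp: bp_def Est_S split: if_splits)
  then obtain e where e: "l' = 4 * dix e + 2 * gq e" by blast
  have "Phi S J d (w, l') = Psi S J d w e (2 * gq e)"
    using Phi_part[of \<sigma> w S J "2 * gq e" d e] HX w wS gq_le[of e] e
    by (simp add: prt_def Est_S)
  also have "\<dots> = (if e = d then Some (Some (w, 0)) else None)"
    using wS gq_le[of e] by (simp add: Psi_def sysof_def psi_S)
  finally have P1: "Phi S J d (w, l') = (if e = d then Some (Some (w, 0)) else None)" .
  have P2: "Phi S J d (u, 2 * dix d + x) = Some (psi S J d (mv u (opp d)) x)"
    using u x by (simp add: Phi_def)
  have "Phi S J d (u, 2 * dix d + x) = Phi S J d (w, l')" using Phi_rtrancl[OF HX w(3)] .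
  then have "e = d" and pe: "psi S J d (mv u (opp d)) x = Some (w, 0)" using P1 P2 by (auto split: if_splits)
  then obtain a where a: "dS S d u = Some a" "((a - 1) div 2^J + x) mod 2 = 0"
    by (auto simp: psi_def split: option.splits)
  then show "\<exists>a. dS S d u = Some a \<and> x = ((a - 1) div 2^J) mod 2" using x
    using a(1) modq[OF a(2) x] by blast
next
  assume "\<exists>a. dS S d u = Some a \<and> x = ((a - 1) div 2^J) mod 2"
  then obtain a where a: "dS S d u = Some a" "x = ((a - 1) div 2^J) mod 2" by blast
  have r: "(link ALG X \<sigma>)\<^sup>*\<^sup>* (u, 2 * dix d + x) (bk d u a, 4 * dix d + 2 * gq d)"
    using chain[OF HX SX CV u(1) u(2) a(1)] a(2) by simp
  have bS: "bk d u a \<in> S" using a by (simp add: dS_Some_iff)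
  have sb: "bk d u a \<in> X" using SX bS by blast
  have "\<sigma> (bk d u a) = Est S J (bk d u a)" by (rule bspec[OF HX sb])
  then have "stS (\<sigma> (bk d u a))" using bS by (simp add: Est_S)
  then have bpf: "4 * dix d + 2 * gq d \<in> bp (\<sigma> (bk d u a))" unfolding bp_def by (simp, blast)
  show "2 * dix d + x \<in> recv ALG X \<sigma> u" unfolding recv_def
    apply (rule CollectI, rule exI[of _ "bk d u a"], rule exI[of _ "4 * dix d + 2 * gq d"])
    using sb bpf r by simp
qed

lemma odd_div_pred: "0 < a \<Longrightarrow> odd (a div 2^J) = (odd ((a - 1) div 2^J) \<noteq> (2^J dvd a))" for a :: nat
proof -
  assume a: "0 < a"
  obtain q where q: "a div 2^J = q + of_bool (2^J dvd a)" "(a-1) div 2^J = q"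
    using div_pred[OF a, of "2^J"] by simp
  show ?thesis unfolding q by (cases "2^J dvd a") auto
qed

lemma dvd_step: "(2^J dvd a \<and> even (a div 2^J)) = (2^Suc J dvd (a::nat))"
proof
  assume h: "2^J dvd a \<and> even (a div 2^J)"
  then obtain k where k: "a = 2^J * k" by blast
  then have "even k" using h by simp
  then show "2^Suc J dvd a" using k by auto
next
  assume "2^Suc J dvd a"
  then obtain k where k: "a = 2^J * (2 * k)" by (auto simp: mult.assoc mult.left_commute)
  then show "2^J dvd a \<and> even (a div 2^J)" by simp
qed

lemma mod_step: "(a::nat) mod 2^Suc J = a mod 2^J + 2^J * of_bool (odd (a div 2^J))"
proof -
  have "a mod (2^J * 2) = 2^J * (a div 2^J mod 2) + a mod 2^J" by (rule mod_mult2_eq)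
  then show ?thesis by (simp add: mult.commute odd_iff_mod_2_eq_one)
qed

lemma cmp_step:
  fixes a b :: nat
  shows "(a mod 2^Suc J \<le> b mod 2^Suc J) =
    (if odd (a div 2^J) \<noteq> odd (b div 2^J) then odd (b div 2^J) else a mod 2^J \<le> b mod 2^J)"
proof -
  have la: "b mod 2^J < a mod 2^J + 2^J" and lb: "a mod 2^J < b mod 2^J + 2^J"
  proof -
    have "a mod 2^J < 2^J" "b mod 2^J < 2^J" by simp_all
    then show "b mod 2^J < a mod 2^J + 2^J" "a mod 2^J < b mod 2^J + 2^J" by linarith+
  qed
  show ?thesis unfolding mod_step[of a J] mod_step[of b J] using la lb
    by (cases "odd (a div 2^J)"; cases "odd (b div 2^J)") auto
qed

definition convex_dir :: "node set \<Rightarrow> dir \<Rightarrow> bool" where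
  "convex_dir X d \<longleftrightarrow> (\<forall>u\<in>X. \<forall>a k. bk d u a \<in> X \<longrightarrow> k \<le> a \<longrightarrow> bk d u k \<in> X)"

lemma step_state:
  assumes HX: "\<forall>w\<in>X. \<sigma> w = Est S J w" and SX: "S \<subseteq> X" and CV: "\<forall>d. convex_dir X d"
    and u: "u \<in> X"
  shows "dlt (\<sigma> u) (recv ALG X \<sigma> u) = Est S (Suc J) u"
proof (cases "u \<in> S")
  case True
  then show ?thesis using HX u by (simp add: dlt_def Est_def ini_def)
next
  case False
  define R where "R = recv ALG X \<sigma> u"
  have su: "\<sigma> u = Est S J u" using HX u by blast
  have rs: "\<And>e x. x < 2 \<Longrightarrow> (2 * dix e + x \<in> R) \<longleftrightarrow> (\<exists>a. dS S e u = Some a \<and> x = ((a - 1) div 2^J) mod 2)"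
    unfolding R_def using recv_sys[OF HX SX _ u False] CV by (simp add: convex_dir_def)
  have rx: "rxv R e \<longleftrightarrow> dS S e u \<noteq> None" for e
  proof -
    have r0: "(2 * dix e \<in> R) = (\<exists>a. dS S e u = Some a \<and> ((a - 1) div 2^J) mod 2 = 0)"
      using rs[of 0 e] by auto
    have r1: "(2 * dix e + 1 \<in> R) = (\<exists>a. dS S e u = Some a \<and> ((a - 1) div 2^J) mod 2 = 1)"
      using rs[of 1 e] by auto
    have m: "\<And>q::nat. q mod 2 = 0 \<or> q mod 2 = 1" by presburger
    show ?thesis unfolding rxv_def r0 r1 using m by (cases "dS S e u") auto
  qed
  have bt: "dS S e u = Some a \<Longrightarrow> bitv (\<sigma> u) R e = odd (a div 2^J)" for e a
  proof -
    assume h: "dS S e u = Some a"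
    then have a0: "0 < a" by (simp add: dS_Some_iff)
    have "xv R e = odd ((a - 1) div 2^J)"
      using rs[of 1 e] h unfolding xv_def by (auto simp: odd_iff_mod_2_eq_one)
    then show ?thesis unfolding bitv_def using su False h odd_div_pred[OF a0, of J]
      by (simp add: Est_A)
  qed
  have A: "(if rxv R e then stA (\<sigma> u) e \<and> \<not> bitv (\<sigma> u) R e else stA (\<sigma> u) e) =
      (case dS S e u of None \<Rightarrow> True | Some a \<Rightarrow> 2^Suc J dvd a)" for e
    using rx[of e] bt[of e] su False dvd_step[of J]
    by (cases "dS S e u") (auto simp: Est_A)
  have H: "rxv R e = (0 < Suc J \<and> dS S e u \<noteq> None)" for e using rx by simp
  have Cm: "(if rxv R e \<and> rxv R (opp e) \<and> bitv (\<sigma> u) R e \<noteq> bitv (\<sigma> u) R (opp e)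
       then bitv (\<sigma> u) R (opp e) else stC (\<sigma> u) e) =
     (case (dS S e u, dS S (opp e) u) of (Some a, Some b) \<Rightarrow> a mod 2^Suc J \<le> b mod 2^Suc J | _ \<Rightarrow> True)" for e
  proof (cases "dS S e u")
    case None
    then show ?thesis using rx su False by (simp add: Est_def)
  next
    case (Some a)
    show ?thesis
    proof (cases "dS S (opp e) u")
      case None
      then show ?thesis using Some rx su False by (simp add: Est_def)
    next
      case (Some b)
      then show ?thesis using \<open>dS S e u = Some a\<close> rx bt[of e a] bt[of "opp e" b] su False
        cmp_step[of a J b] by (simp add: Est_def)
    qed
  qed
  have "dlt (\<sigma> u) R = enc False (\<lambda>e. if rxv R e then stA (\<sigma> u) e \<and> \<not> bitv (\<sigma> u) R e else stA (\<sigma> u) e) (\<lambda>e. rxv R e)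
       (\<lambda>e. if rxv R e \<and> rxv R (opp e) \<and> bitv (\<sigma> u) R e \<noteq> bitv (\<sigma> u) R (opp e)
       then bitv (\<sigma> u) R (opp e) else stC (\<sigma> u) e)"
    using su False unfolding dlt_def by (simp add: Est_S)
  also have "\<dots> = enc False (\<lambda>e. case dS S e u of None \<Rightarrow> True | Some a \<Rightarrow> 2^Suc J dvd a)
       (\<lambda>e. 0 < Suc J \<and> dS S e u \<noteq> None)
       (\<lambda>e. case (dS S e u, dS S (opp e) u) of (Some a, Some b) \<Rightarrow> a mod 2^Suc J \<le> b mod 2^Suc J | _ \<Rightarrow> True)"
    by (simp only: A Cm, simp only: H)
  also have "\<dots> = Est S (Suc J) u" using False unfolding Est_def by simp
  finally show ?thesis unfolding R_def .
qed

lemma run_Est: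
  assumes SX: "S \<subseteq> X" and CV: "\<forall>d. convex_dir X d"
  shows "\<forall>u\<in>X. run ALG X S J u = Est S J u"
proof (induction J)
  case 0
  show ?case by (auto simp: Est_def ini_def split: option.splits)
next
  case (Suc J)
  show ?case using step_state[OF Suc SX CV] by simp
qed

locale lf0 =
  fixes p :: node and d :: dir and n :: nat and X S :: "node set"
  assumes X_def: "X = {(fst p + int k * fst (dvec d), snd p + int k * snd (dvec d)) | k. k < n}"
  and SX: "S \<subseteq> X"
begin

definition pos :: "int \<Rightarrow> node" where
  "pos i = (fst p + i * fst (dvec d), snd p + i * snd (dvec d))"

lemma X_pos: "X = pos ` {0..<int n}"
proof
  show "X \<subseteq> pos ` {0..<int n}" unfolding X_def pos_def by force
next
  show "pos ` {0..<int n} \<subseteq> X"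
  proof
    fix x assume "x \<in> pos ` {0..<int n}"
    then obtain i where i: "0 \<le> i" "i < int n" "x = pos i" by auto
    then have "x = (fst p + int (nat i) * fst (dvec d), snd p + int (nat i) * snd (dvec d)) \<and> nat i < n"
      by (simp add: pos_def)
    then show "x \<in> X" unfolding X_def by blast
  qed
qed

lemma pos_inj[simp]: "pos i = pos j \<longleftrightarrow> i = j"
  unfolding pos_def by (cases d) auto

lemma pos_in_X: "pos i \<in> X \<longleftrightarrow> 0 \<le> i \<and> i < int n"
  unfolding X_pos by auto

lemma X_ex: "u \<in> X \<Longrightarrow> \<exists>i. u = pos i \<and> 0 \<le> i \<and> i < int n"
  unfolding X_pos by auto

lemma bk_d: "bk d (pos i) a = pos (i - int a)"
  by (simp add: bk_def pos_def algebra_simps)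
lemma bk_od: "bk (opp d) (pos i) a = pos (i + int a)"
  by (simp add: bk_def pos_def dvec_opp algebra_simps)
lemma mv_d: "mv (pos i) d = pos (i + 1)"
  by (simp add: mv_def pos_def algebra_simps)
lemma mv_od: "mv (pos i) (opp d) = pos (i - 1)"
  by (simp add: mv_def pos_def dvec_opp algebra_simps)

lemma lin: "(m::int) \<noteq> 0 \<Longrightarrow> (m * fst (dvec e), m * snd (dvec e)) = (m' * fst (dvec d), m' * snd (dvec d))
  \<Longrightarrow> e = d \<or> e = opp d"
  by (cases e; cases d) auto

lemma bk_other: "0 < a \<Longrightarrow> e \<noteq> d \<Longrightarrow> e \<noteq> opp d \<Longrightarrow> bk e (pos i) a \<notin> X"
proof
  assume a: "0 < a" "e \<noteq> d" "e \<noteq> opp d" "bk e (pos i) a \<in> X"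
  then obtain k where k: "bk e (pos i) a = pos k" using X_ex by blast
  have "(- int a * fst (dvec e), - int a * snd (dvec e)) = ((k - i) * fst (dvec d), (k - i) * snd (dvec d))"
    using k by (auto simp: bk_def pos_def algebra_simps)
  then have "e = d \<or> e = opp d" using lin[of "- int a" e "k - i"] a(1) by simp
  then show False using a by blast
qed

lemma dS_other: "e \<noteq> d \<Longrightarrow> e \<noteq> opp d \<Longrightarrow> dS S e (pos i) = None"
  using bk_other SX unfolding dS_None_iff by blast

lemma Ld_iff: "dS S d (pos i) = Some a \<longleftrightarrow>
  (0 < a \<and> pos (i - int a) \<in> S \<and> (\<forall>a'. 0 < a' \<longrightarrow> a' < a \<longrightarrow> pos (i - int a') \<notin> S))"
  by (simp add: dS_Some_iff bk_d)

lemma Rd_iff: "dS S (opp d) (pos i) = Some a \<longleftrightarrow>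
  (0 < a \<and> pos (i + int a) \<in> S \<and> (\<forall>a'. 0 < a' \<longrightarrow> a' < a \<longrightarrow> pos (i + int a') \<notin> S))"
  by (simp add: dS_Some_iff bk_od)

lemma Ld_ex: "pos (i - int a) \<in> S \<Longrightarrow> 0 < a \<Longrightarrow> \<exists>a0. dS S d (pos i) = Some a0 \<and> a0 \<le> a"
proof -
  assume h: "pos (i - int a) \<in> S" "0 < a"
  then obtain a0 where "dS S d (pos i) = Some a0"
    by (cases "dS S d (pos i)") (auto simp: dS_None_iff bk_d)
  moreover then have "a0 \<le> a" using h Ld_iff by (meson not_le)
  ultimately show ?thesis by blast
qed

lemma Rd_ex: "pos (i + int a) \<in> S \<Longrightarrow> 0 < a \<Longrightarrow> \<exists>a0. dS S (opp d) (pos i) = Some a0 \<and> a0 \<le> a"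
proof -
  assume h: "pos (i + int a) \<in> S" "0 < a"
  then obtain a0 where "dS S (opp d) (pos i) = Some a0"
    by (cases "dS S (opp d) (pos i)") (auto simp: dS_None_iff bk_od)
  moreover then have "a0 \<le> a" using h Rd_iff by (meson not_le)
  ultimately show ?thesis by blast
qed

end

locale lf = lf0 +
  fixes pr :: "node \<Rightarrow> dir option"
  assumes PR: "\<forall>u\<in>X - S. \<exists>e a. pr u = Some (opp e) \<and> dS S e u = Some a \<and> (\<forall>b. dS S (opp e) u = Some b \<longrightarrow> a \<le> b)"
begin

lemma PR_pos: "0 \<le> i \<Longrightarrow> i < int n \<Longrightarrow> pos i \<notin> S \<Longrightarrow>
   \<exists>e a. pr (pos i) = Some (opp e) \<and> dS S e (pos i) = Some a \<and> (\<forall>b. dS S (opp e) (pos i) = Some b \<longrightarrow> a \<le> b)"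
  using PR pos_in_X by blast

lemma T4d:
  assumes i: "0 \<le> i" "i < int n" "pos i \<notin> S" and pi: "pr (pos i) = Some (opp d)"
    and a: "dS S d (pos i) = Some a" and m: "i - int a < m" "m \<le> i"
  shows "pos m \<notin> S \<and> pr (pos m) = Some (opp d) \<and> dS S d (pos m) = Some (a - nat (i - m))"
proof (cases "m = i")
  case True
  then show ?thesis using i pi a by simp
next
  case False
  then have mi: "m < i" using m by simp
  have aL: "0 < a" "pos (i - int a) \<in> S" "\<And>a'. 0 < a' \<Longrightarrow> a' < a \<Longrightarrow> pos (i - int a') \<notin> S"
    using a Ld_iff by blast+
  have ab: "\<forall>b. dS S (opp d) (pos i) = Some b \<longrightarrow> a \<le> b"
    using PR_pos[OF i] pi a by force
  have mS: "pos m \<notin> S" using aL(3)[of "nat (i - m)"] m mi by simp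
  have "0 \<le> i - int a" using aL(2) SX pos_in_X by blast
  then have m0: "0 \<le> m" "m < int n" using m i by auto
  have dm: "dS S d (pos m) = Some (a - nat (i - m))"
    unfolding Ld_iff
  proof (intro conjI allI impI)
    show "0 < a - nat (i - m)" using m by simp
    show "pos (m - int (a - nat (i - m))) \<in> S" using aL(2) m by (simp add: of_nat_diff)
  next
    fix a' assume "0 < a'" "a' < a - nat (i - m)"
    then show "pos (m - int a') \<notin> S" using aL(3)[of "nat (i - m) + a'"] mi by simp
  qed
  obtain e a1 where e: "pr (pos m) = Some (opp e)" "dS S e (pos m) = Some a1"
    "\<forall>b. dS S (opp e) (pos m) = Some b \<longrightarrow> a1 \<le> b"
    using PR_pos[OF m0 mS] by blast
  have "e = d"
  proof (rule ccontr)
    assume ne: "e \<noteq> d"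
    have "e = opp d" using e(2) dS_other[OF ne, of m] by fastforce
    then have b': "dS S (opp d) (pos m) = Some a1" "a1 \<le> a - nat (i - m)" using e dm by auto
    then have r: "0 < a1" "pos (m + int a1) \<in> S" using Rd_iff by blast+
    show False
    proof (cases "m + int a1 \<le> i")
      case True
      show False
      proof (cases "m + int a1 = i")
        case True then show False using r i by simp
      next
        case False
        have lt: "nat (i - (m + int a1)) < a" using m r(1) by arith
        have gt: "0 < nat (i - (m + int a1))" using True False by arith
        have eq: "i - int (nat (i - (m + int a1))) = m + int a1" using True by arith
        show False using aL(3)[OF gt lt] r(2) unfolding eq by blast
      qed
    next
      case False
      then obtain b where b: "dS S (opp d) (pos i) = Some b" "b \<le> nat (m + int a1 - i)"
        using Rd_ex[of i "nat (m + int a1 - i)"] r by auto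
      then show False using ab b' mi m by force
    qed
  qed
  then show ?thesis using mS e dm by simp
qed

end

definition ilist :: "int \<Rightarrow> int \<Rightarrow> int list" where
  "ilist a b = (if a \<le> b then [a..b] else rev [b..a])"

lemma ilist_same[simp]: "ilist a a = [a]" by (simp add: ilist_def)
lemma ilist_up: "a < b \<Longrightarrow> ilist a b = a # ilist (a + 1) b"
  by (simp add: ilist_def upto_rec1)
lemma ilist_down: "b < a \<Longrightarrow> ilist a b = a # ilist (a - 1) b"
proof -
  assume h: "b < a"
  have "[b..a] = [b..a-1] @ [a]" using h upto_rec2[of b a] by simp
  then show ?thesis using h by (cases "a - 1 = b") (auto simp: ilist_def)
qed
lemma set_ilist: "set (ilist a b) = {min a b..max a b}" by (auto simp: ilist_def)
lemma distinct_ilist: "distinct (ilist a b)" by (simp add: ilist_def)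
lemma length_ilist: "length (ilist a b) = Suc (nat \<bar>a - b\<bar>)"
  by (auto simp: ilist_def abs_if nat_add_distrib)
lemma hd_ilist: "hd (ilist a b) = a"
proof (cases "a \<le> b")
  case True
  then have "[a..b] = a # [a+1..b]" by (rule upto_rec1)
  then show ?thesis using True by (simp add: ilist_def)
next
  case False
  then have "[b..a] = [b..a-1] @ [a]" using upto_rec2[of b a] by simp
  then show ?thesis using False by (simp add: ilist_def)
qed
lemma last_ilist: "last (ilist a b) = b"
proof (cases "a \<le> b")
  case True
  then have "[a..b] = [a..b-1] @ [b]" by (rule upto_rec2)
  then show ?thesis using True by (simp add: ilist_def)
next
  case False
  then have "[b..a] = b # [b+1..a]" using upto_rec1[of b a] by simp
  then show ?thesis using False by (simp add: ilist_def)
qed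
lemma ilist_ne: "ilist a b \<noteq> []" using length_ilist[of a b] by auto

lemma ilist_end_up: "k < i \<Longrightarrow> \<exists>zs. ilist k i = zs @ [i - 1, i]"
proof -
  assume h: "k < i"
  have "[k..i] = [k..i-1] @ [i]" using h upto_rec2[of k i] by simp
  moreover have "[k..i-1] = [k..i-2] @ [i-1]" using h upto_rec2[of k "i-1"] by simp
  ultimately show ?thesis using h by (simp add: ilist_def)
qed

lemma ilist_end_down: "i < k \<Longrightarrow> \<exists>zs. ilist k i = zs @ [i + 1, i]"
proof -
  assume h: "i < k"
  have "[i..k] = i # (i + 1) # [i + 1 + 1..k]" using h upto_rec1[of i k] upto_rec1[of "i+1" k] by simp
  then have "ilist k i = rev [i + 1 + 1..k] @ [i + 1, i]" using h by (simp add: ilist_def)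
  then show ?thesis by blast
qed

lemma epath_single[simp]: "epath F [x]" by (simp add: epath_def)
lemma epath_Cons2: "epath F (x # y # ys) \<longleftrightarrow> {x, y} \<in> F \<and> epath F (y # ys)"
proof
  assume h: "epath F (x # y # ys)"
  have "{x, y} \<in> F" using h[unfolded epath_def] by (metis length_Cons nth_Cons_0 nth_Cons_Suc zero_less_Suc Suc_less_eq)
  moreover have "epath F (y # ys)" unfolding epath_def
  proof (intro conjI allI impI)
    fix i assume "Suc i < length (y # ys)"
    then show "{(y # ys) ! i, (y # ys) ! Suc i} \<in> F" using h[unfolded epath_def, THEN conjunct2, rule_format, of "Suc i"] by simp
  qed simp
  ultimately show "{x, y} \<in> F \<and> epath F (y # ys)" by blast
next
  assume h: "{x, y} \<in> F \<and> epath F (y # ys)"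
  show "epath F (x # y # ys)" unfolding epath_def
  proof (intro conjI allI impI)
    fix i assume i: "Suc i < length (x # y # ys)"
    show "{(x # y # ys) ! i, (x # y # ys) ! Suc i} \<in> F"
    proof (cases i)
      case 0 then show ?thesis using h by simp
    next
      case (Suc j) then show ?thesis using h i unfolding epath_def by simp
    qed
  qed simp
qed

lemma walk_Cons2: "walk X (x # y # ys) \<longleftrightarrow> x \<in> X \<and> grid_adj x y \<and> walk X (y # ys)"
proof
  assume h: "walk X (x # y # ys)"
  have "grid_adj x y" using h[unfolded walk_def] by (metis length_Cons nth_Cons_0 nth_Cons_Suc zero_less_Suc Suc_less_eq)
  moreover have "walk X (y # ys)" unfolding walk_def
  proof (intro conjI allI impI)
    show "set (y # ys) \<subseteq> X" using h by (simp add: walk_def)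
    fix i assume "Suc i < length (y # ys)"
    then show "grid_adj ((y # ys) ! i) ((y # ys) ! Suc i)" using h[unfolded walk_def, THEN conjunct2, THEN conjunct2, rule_format, of "Suc i"] by simp
  qed simp
  ultimately show "x \<in> X \<and> grid_adj x y \<and> walk X (y # ys)" using h by (simp add: walk_def)
next
  assume h: "x \<in> X \<and> grid_adj x y \<and> walk X (y # ys)"
  show "walk X (x # y # ys)" unfolding walk_def
  proof (intro conjI allI impI)
    show "set (x # y # ys) \<subseteq> X" using h by (simp add: walk_def)
    fix i assume i: "Suc i < length (x # y # ys)"
    show "grid_adj ((x # y # ys) ! i) ((x # y # ys) ! Suc i)"
    proof (cases i)
      case 0 then show ?thesis using h by simp
    next
      case (Suc j) then show ?thesis using h i unfolding walk_def by simp
    qed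
  qed simp
qed

lemma walk_single: "x \<in> X \<Longrightarrow> walk X [x]" by (simp add: walk_def)

context lf0
begin

lemma convex_all: "convex_dir X e"
  unfolding convex_dir_def
proof (intro ballI allI impI)
  fix u a k assume u: "u \<in> X" and b: "bk e u a \<in> X" and k: "k \<le> a"
  obtain i where i: "u = pos i" "0 \<le> i" "i < int n" using X_ex[OF u] by blast
  show "bk e u k \<in> X"
  proof (cases "a = 0")
    case True then show ?thesis using k u by simp
  next
    case False
    then have "e = d \<or> e = opp d" using bk_other[of a e i] b i by auto
    then show ?thesis
    proof
      assume "e = d" then show ?thesis using b i k by (simp add: bk_d pos_in_X)
    next
      assume "e = opp d" then show ?thesis using b i k by (simp add: bk_od pos_in_X)
    qed
  qed
qed

lemma dist_bound: "u \<in> X \<Longrightarrow> dS S e u = Some a \<Longrightarrow> a < n"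
proof -
  assume u: "u \<in> X" and a: "dS S e u = Some a"
  obtain i where i: "u = pos i" "0 \<le> i" "i < int n" using X_ex[OF u] by blast
  have a0: "0 < a" and bS: "bk e u a \<in> X" using a SX by (auto simp: dS_Some_iff)
  then have "e = d \<or> e = opp d" using bk_other[of a e i] i by auto
  then show "a < n"
  proof
    assume "e = d" then show ?thesis using bS i by (simp add: bk_d pos_in_X)
  next
    assume "e = opp d" then show ?thesis using bS i by (simp add: bk_od pos_in_X)
  qed
qed

lemma dS_exists: "u \<in> X \<Longrightarrow> u \<notin> S \<Longrightarrow> S \<noteq> {} \<Longrightarrow> \<exists>e a. dS S e u = Some a"
proof -
  assume u: "u \<in> X" "u \<notin> S" "S \<noteq> {}"
  obtain i where i: "u = pos i" "0 \<le> i" "i < int n" using X_ex[OF u(1)] by blast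
  obtain s where s: "s \<in> S" using u by blast
  obtain k where k: "s = pos k" using X_ex s SX by blast
  have "k \<noteq> i" using s k i u by auto
  then show ?thesis
  proof (cases "k < i")
    case True
    then have "pos (i - int (nat (i - k))) \<in> S" using s k by simp
    then show ?thesis using Ld_ex[of i "nat (i - k)"] True i by auto
  next
    case False
    then have "pos (i + int (nat (k - i))) \<in> S" using s k \<open>k \<noteq> i\<close> by simp
    then show ?thesis using Rd_ex[of i "nat (k - i)"] False \<open>k \<noteq> i\<close> i by auto
  qed
qed

lemma adj: "mv (pos a) e = pos c \<Longrightarrow> c = a + 1 \<or> c = a - 1"
proof -
  assume "mv (pos a) e = pos c"
  then have h: "fst (dvec e) = (c - a) * fst (dvec d)" "snd (dvec e) = (c - a) * snd (dvec d)"
    by (simp_all add: mv_def pos_def prod_eq_iff algebra_simps)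
  then have h2: "(1 * fst (dvec e), 1 * snd (dvec e)) = ((c - a) * fst (dvec d), (c - a) * snd (dvec d))" by simp
  have dnz: "fst (dvec d) \<noteq> 0 \<or> snd (dvec d) \<noteq> 0" by (cases d) auto
  have "e = d \<or> e = opp d" using lin[OF _ h2] by simp
  then show ?thesis
  proof
    assume "e = d"
    then have "c - a = 1" using h dnz by auto
    then show ?thesis by simp
  next
    assume "e = opp d"
    then have "- fst (dvec d) = (c - a) * fst (dvec d)" "- snd (dvec d) = (c - a) * snd (dvec d)"
      using h by (simp_all add: dvec_opp)
    then have "c - a = -1" using dnz
      by (metis add.inverse_inverse minus_mult_left mult_cancel_right2)
    then show ?thesis by simp
  qed
qed

lemma walk_len: "walk X xs \<Longrightarrow> hd xs = pos a \<Longrightarrow> last xs = pos b \<Longrightarrow> nat \<bar>a - b\<bar> + 1 \<le> length xs"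
proof (induction xs arbitrary: a)
  case Nil then show ?case by (simp add: walk_def)
next
  case (Cons x xs)
  show ?case
  proof (cases xs)
    case Nil then show ?thesis using Cons.prems by simp
  next
    fix y ys assume Cons2: "xs = y # ys"
    have w: "x \<in> X" "grid_adj x y" "walk X (y # ys)" using Cons.prems(1) Cons2 walk_Cons2 by auto
    have "y \<in> X" using w(3) by (simp add: walk_def)
    then obtain c where c: "y = pos c" using X_ex by blast
    have x: "x = pos a" using Cons.prems by simp
    have cc: "c = a + 1 \<or> c = a - 1" using w(2) c x adj unfolding grid_adj_def by metis
    have "nat \<bar>c - b\<bar> + 1 \<le> length xs" using Cons.IH[of c] w(3) Cons2 c Cons.prems(3) by simp
    then show ?thesis using cc by auto
  qed
qed

lemma walk_ilist: "0 \<le> a \<Longrightarrow> a < int n \<Longrightarrow> 0 \<le> b \<Longrightarrow> b < int n \<Longrightarrow> walk X (map pos (ilist a b))"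
proof (induction "nat \<bar>a - b\<bar>" arbitrary: a)
  case 0
  then have "a = b" by simp
  then show ?case using 0 by (simp add: walk_single pos_in_X)
next
  case (Suc m)
  show ?case
  proof (cases "a < b")
    case True
    have IH: "walk X (map pos (ilist (a + 1) b))" using Suc True by (intro Suc.hyps) auto
    have "grid_adj (pos a) (pos (a + 1))" unfolding grid_adj_def using mv_d by metis
    moreover have eq2: "map pos (ilist (a + 1) b) = pos (a + 1) # map pos (tl (ilist (a+1) b))"
      using ilist_ne hd_ilist by (metis list.collapse list.simps(9))
    moreover have "pos a \<in> X" using Suc.prems pos_in_X by simp
    ultimately have "walk X (pos a # map pos (ilist (a + 1) b))"
      using IH unfolding eq2 walk_Cons2 by simp
    then show ?thesis by (simp add: ilist_up[OF True])
  next
    case False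
    then have ba: "b < a" using Suc.hyps(2) by auto
    have IH: "walk X (map pos (ilist (a - 1) b))" using Suc ba by (intro Suc.hyps) auto
    have "grid_adj (pos a) (pos (a - 1))" unfolding grid_adj_def using mv_od by metis
    moreover have eq2: "map pos (ilist (a - 1) b) = pos (a - 1) # map pos (tl (ilist (a - 1) b))"
      using ilist_ne hd_ilist by (metis list.collapse list.simps(9))
    moreover have "pos a \<in> X" using Suc.prems pos_in_X by simp
    ultimately have "walk X (pos a # map pos (ilist (a - 1) b))"
      using IH unfolding eq2 walk_Cons2 by simp
    then show ?thesis by (simp add: ilist_down[OF ba])
  qed
qed

lemma gdist_pos: "0 \<le> a \<Longrightarrow> a < int n \<Longrightarrow> 0 \<le> b \<Longrightarrow> b < int n \<Longrightarrow> gdist X (pos a) (pos b) = nat \<bar>a - b\<bar>"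
  unfolding gdist_def
proof (rule Least_equality)
  assume h: "0 \<le> a" "a < int n" "0 \<le> b" "b < int n"
  show "\<exists>xs. walk X xs \<and> hd xs = pos a \<and> last xs = pos b \<and> length xs = Suc (nat \<bar>a - b\<bar>)"
    using walk_ilist[OF h] ilist_ne[of a b] hd_ilist[of a b] last_ilist[of a b] length_ilist[of a b]
    by (intro exI[of _ "map pos (ilist a b)"]) (simp add: hd_map last_map)
next
  fix k assume "\<exists>xs. walk X xs \<and> hd xs = pos a \<and> last xs = pos b \<and> length xs = Suc k"
  then show "nat \<bar>a - b\<bar> \<le> k" using walk_len by fastforce
qed

end

lemma doubleton_eq: "{a, b} = {c, e} \<longleftrightarrow> (a = c \<and> b = e) \<or> (a = e \<and> b = c)"
  by (auto simp: doubleton_eq_iff)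

context lf0
begin

lemma epath_ilist:
  assumes conv: "\<forall>i j m. i \<in> WW \<longrightarrow> j \<in> WW \<longrightarrow> i \<le> m \<longrightarrow> m \<le> j \<longrightarrow> m \<in> WW"
    and FW: "F = {{pos i, pos (i+1)} | i. i \<in> WW \<and> i + 1 \<in> WW}"
  shows "a \<in> WW \<Longrightarrow> b \<in> WW \<Longrightarrow> epath F (map pos (ilist a b))"
proof (induction "nat \<bar>a - b\<bar>" arbitrary: a)
  case 0
  then have "a = b" by simp
  then show ?case by simp
next
  case (Suc m)
  show ?case
  proof (cases "a < b")
    case True
    have a1: "a + 1 \<in> WW" using conv[rule_format, of a b "a + 1"] Suc.prems True by simp
    have IH: "epath F (map pos (ilist (a + 1) b))" using Suc True a1 by (intro Suc.hyps) auto
    have e: "{pos a, pos (a + 1)} \<in> F" unfolding FW using Suc.prems a1 by blast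
    have eq2: "map pos (ilist (a + 1) b) = pos (a + 1) # map pos (tl (ilist (a+1) b))"
      using ilist_ne hd_ilist by (metis list.collapse list.simps(9))
    have "epath F (pos a # map pos (ilist (a + 1) b))"
      using IH e unfolding eq2 epath_Cons2 by simp
    then show ?thesis by (simp add: ilist_up[OF True])
  next
    case False
    then have ba: "b < a" using Suc.hyps(2) by auto
    have a1: "a - 1 \<in> WW" using conv[rule_format, of b a "a - 1"] Suc.prems ba by simp
    have IH: "epath F (map pos (ilist (a - 1) b))" using Suc ba a1 by (intro Suc.hyps) auto
    have "\<exists>i. {pos a, pos (a - 1)} = {pos i, pos (i + 1)} \<and> i \<in> WW \<and> i + 1 \<in> WW"
      by (rule exI[of _ "a - 1"]) (auto simp: a1 Suc.prems insert_commute)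
    then have e: "{pos a, pos (a - 1)} \<in> F" unfolding FW by simp
    have eq2: "map pos (ilist (a - 1) b) = pos (a - 1) # map pos (tl (ilist (a - 1) b))"
      using ilist_ne hd_ilist by (metis list.collapse list.simps(9))
    have "epath F (pos a # map pos (ilist (a - 1) b))"
      using IH e unfolding eq2 epath_Cons2 by simp
    then show ?thesis by (simp add: ilist_down[OF ba])
  qed
qed

lemma epath_unique:
  assumes FW: "F = {{pos i, pos (i+1)} | i. i \<in> WW \<and> i + 1 \<in> WW}"
  shows "epath F xs \<Longrightarrow> distinct xs \<Longrightarrow> hd xs = pos a \<Longrightarrow> \<exists>b. last xs = pos b \<and> xs = map pos (ilist a b)"
proof (induction xs arbitrary: a)
  case Nil then show ?case by (simp add: epath_def)
next
  case (Cons x xs)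
  show ?case
  proof (cases xs)
    case Nil then show ?thesis using Cons.prems by (intro exI[of _ a]) simp
  next
    fix y ys assume xs: "xs = y # ys"
    have ep: "{x, y} \<in> F" "epath F (y # ys)" using Cons.prems(1) xs epath_Cons2 by auto
    have x: "x = pos a" using Cons.prems by simp
    obtain c where "{pos a, y} = {pos c, pos (c + 1)}" using ep(1) x unfolding FW by blast
    then have yc: "y = pos (a + 1) \<or> y = pos (a - 1)" unfolding doubleton_eq by auto
    have dxs: "distinct xs" "x \<notin> set xs" using Cons.prems by auto
    show ?thesis
    using yc proof
      assume y: "y = pos (a + 1)"
      obtain b where b: "last xs = pos b" "xs = map pos (ilist (a + 1) b)"
        using Cons.IH[OF _ dxs(1), of "a + 1"] ep(2) xs y by auto
      have "a < b"
      proof (rule ccontr)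
        assume "\<not> a < b"
        then have "a \<in> set (ilist (a + 1) b)" by (simp add: set_ilist)
        then show False using dxs(2) b(2) x by auto
      qed
      then show ?thesis using b x ilist_ne by (intro exI[of _ b]) (simp add: ilist_up)
    next
      assume y: "y = pos (a - 1)"
      obtain b where b: "last xs = pos b" "xs = map pos (ilist (a - 1) b)"
        using Cons.IH[OF _ dxs(1), of "a - 1"] ep(2) xs y by auto
      have "b < a"
      proof (rule ccontr)
        assume "\<not> b < a"
        then have "a \<in> set (ilist (a - 1) b)" by (simp add: set_ilist)
        then show False using dxs(2) b(2) x by auto
      qed
      then show ?thesis using b x ilist_ne by (intro exI[of _ b]) (simp add: ilist_down)
    qed
  qed
qed

lemma tpath_iff:
  assumes conv: "\<forall>i j m. i \<in> WW \<longrightarrow> j \<in> WW \<longrightarrow> i \<le> m \<longrightarrow> m \<le> j \<longrightarrow> m \<in> WW"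
    and FW: "F = {{pos i, pos (i+1)} | i. i \<in> WW \<and> i + 1 \<in> WW}"
    and a: "a \<in> WW" and b: "b \<in> WW"
  shows "tpath F (pos a) (pos b) xs \<longleftrightarrow> xs = map pos (ilist a b)"
proof
  assume "tpath F (pos a) (pos b) xs"
  then have h: "epath F xs" "distinct xs" "hd xs = pos a" "last xs = pos b" by (auto simp: tpath_def)
  obtain b' where "last xs = pos b'" "xs = map pos (ilist a b')" using epath_unique[OF FW h(1-3)] by blast
  then show "xs = map pos (ilist a b)" using h(4) by simp
next
  assume xs: "xs = map pos (ilist a b)"
  have inj: "inj pos" by (simp add: inj_def)
  show "tpath F (pos a) (pos b) xs" unfolding tpath_def xs
    using epath_ilist[OF conv FW a b] distinct_ilist[of a b] hd_ilist[of a b] last_ilist[of a b] ilist_ne[of a b]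
    by (simp add: distinct_map inj_on_def hd_map last_map)
qed

end

context lf
begin

lemma lf_refl: "lf (pos (int n - 1)) (opp d) n X S pr"
proof
  have e: "(fst (pos (int n - 1)) + int k * fst (dvec (opp d)), snd (pos (int n - 1)) + int k * snd (dvec (opp d)))
     = pos (int n - 1 - int k)" for k
    by (simp add: pos_def dvec_opp algebra_simps)
  show "X = {(fst (pos (int n - 1)) + int k * fst (dvec (opp d)), snd (pos (int n - 1)) + int k * snd (dvec (opp d))) | k. k < n}"
    unfolding e
  proof
    show "X \<subseteq> {pos (int n - 1 - int k) | k. k < n}"
    proof
      fix x assume "x \<in> X"
      then obtain i where i: "x = pos i" "0 \<le> i" "i < int n" using X_ex by blast
      then have "x = pos (int n - 1 - int (nat (int n - 1 - i))) \<and> nat (int n - 1 - i) < n" by simp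
      then show "x \<in> {pos (int n - 1 - int k) | k. k < n}" by blast
    qed
  next
    show "{pos (int n - 1 - int k) | k. k < n} \<subseteq> X"
    proof
      fix x assume "x \<in> {pos (int n - 1 - int k) | k. k < n}"
      then obtain k where "x = pos (int n - 1 - int k)" "k < n" by blast
      then show "x \<in> X" using pos_in_X by simp
    qed
  qed
  show "S \<subseteq> X" using SX .
  show "\<forall>u\<in>X - S. \<exists>e a. pr u = Some (opp e) \<and> dS S e u = Some a \<and> (\<forall>b. dS S (opp e) u = Some b \<longrightarrow> a \<le> b)"
    using PR .
qed


lemma T4od:
  assumes i: "0 \<le> i" "i < int n" "pos i \<notin> S" and pi: "pr (pos i) = Some d"
    and a: "dS S (opp d) (pos i) = Some a" and m: "i \<le> m" "m < i + int a"
  shows "pos m \<notin> S \<and> pr (pos m) = Some d \<and> dS S (opp d) (pos m) = Some (a - nat (m - i))"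
proof -
  interpret R: lf "pos (int n - 1)" "opp d" n X S pr by (rule lf_refl)
  have pos_refl: "R.pos j = pos (int n - 1 - j)" for j
    unfolding R.pos_def by (simp add: pos_def dvec_opp algebra_simps)
  have "R.pos (int n - 1 - m) \<notin> S \<and> pr (R.pos (int n - 1 - m)) = Some (opp (opp d)) \<and>
     dS S (opp d) (R.pos (int n - 1 - m)) = Some (a - nat ((int n - 1 - i) - (int n - 1 - m)))"
    using i pi a m by (intro R.T4d) (simp_all add: pos_refl)
  then show ?thesis by (simp add: pos_refl)
qed

definition ech :: "node \<Rightarrow> dir" where "ech u = opp (the (pr u))"

lemma ech_prop:
  assumes "0 \<le> i" "i < int n" "pos i \<notin> S"
  shows "pr (pos i) = Some (opp (ech (pos i))) \<and> (\<exists>a. dS S (ech (pos i)) (pos i) = Some a \<and>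
     (\<forall>b. dS S (opp (ech (pos i))) (pos i) = Some b \<longrightarrow> a \<le> b))"
proof -
  obtain e a where e: "pr (pos i) = Some (opp e)" "dS S e (pos i) = Some a" "\<forall>b. dS S (opp e) (pos i) = Some b \<longrightarrow> a \<le> b"
    using PR_pos[OF assms] by blast
  then have "ech (pos i) = e" by (simp add: ech_def)
  then show ?thesis using e by auto
qed

lemma ech_cases: "0 \<le> i \<Longrightarrow> i < int n \<Longrightarrow> pos i \<notin> S \<Longrightarrow> ech (pos i) = d \<or> ech (pos i) = opp d"
proof -
  assume h: "0 \<le> i" "i < int n" "pos i \<notin> S"
  from ech_prop[OF h] obtain a where "dS S (ech (pos i)) (pos i) = Some a" by blast
  then show ?thesis using dS_other[of "ech (pos i)" i] by auto
qed

definition ti :: "int \<Rightarrow> int" where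
  "ti i = (if pos i \<in> S then i else if ech (pos i) = d then i - int (the (dS S d (pos i)))
           else i + int (the (dS S (opp d) (pos i))))"

lemma ti_S: "pos i \<in> S \<Longrightarrow> ti i = i" by (simp add: ti_def)

lemma ti_L:
  assumes "0 \<le> i" "i < int n" "pos i \<notin> S" "ech (pos i) = d"
  shows "\<exists>a. dS S d (pos i) = Some a \<and> ti i = i - int a \<and> pr (pos i) = Some (opp d) \<and>
    (\<forall>b. dS S (opp d) (pos i) = Some b \<longrightarrow> a \<le> b)"
  using ech_prop[OF assms(1-3)] assms by (auto simp: ti_def)

lemma ti_R:
  assumes "0 \<le> i" "i < int n" "pos i \<notin> S" "ech (pos i) \<noteq> d"
  shows "\<exists>a. dS S (opp d) (pos i) = Some a \<and> ti i = i + int a \<and> pr (pos i) = Some d \<and>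
    (\<forall>b. dS S d (pos i) = Some b \<longrightarrow> a \<le> b)"
proof -
  have e: "ech (pos i) = opp d" using ech_cases[OF assms(1-3)] assms(4) by blast
  show ?thesis using ech_prop[OF assms(1-3)] assms e by (auto simp: ti_def)
qed

lemma ti_in:
  assumes "0 \<le> i" "i < int n"
  shows "pos (ti i) \<in> S \<and> 0 \<le> ti i \<and> ti i < int n"
proof -
  have "pos (ti i) \<in> S"
  proof (cases "pos i \<in> S")
    case True then show ?thesis by (simp add: ti_S)
  next
    case nS: False
    show ?thesis
    proof (cases "ech (pos i) = d")
      case True
      then obtain a where "dS S d (pos i) = Some a" "ti i = i - int a" using ti_L[OF assms nS] by blast
      then show ?thesis using Ld_iff by auto
    next
      case False
      then obtain a where "dS S (opp d) (pos i) = Some a" "ti i = i + int a" using ti_R[OF assms nS] by blast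
      then show ?thesis using Rd_iff by auto
    qed
  qed
  then show ?thesis using SX pos_in_X by blast
qed

lemma ti_dir:
  assumes "0 \<le> i" "i < int n" "pos i \<notin> S"
  shows "(ti i < i \<and> pr (pos i) = Some (opp d)) \<or> (i < ti i \<and> pr (pos i) = Some d)"
proof (cases "ech (pos i) = d")
  case True
  then obtain a where "dS S d (pos i) = Some a" "ti i = i - int a" "pr (pos i) = Some (opp d)"
    using ti_L[OF assms] by blast
  then show ?thesis using Ld_iff by auto
next
  case False
  then obtain a where "dS S (opp d) (pos i) = Some a" "ti i = i + int a" "pr (pos i) = Some d"
    using ti_R[OF assms] by blast
  then show ?thesis using Rd_iff by auto
qed

lemma ti_close:
  assumes i: "0 \<le> i" "i < int n" and k: "pos k \<in> S"
  shows "\<bar>ti i - i\<bar> \<le> \<bar>k - i\<bar>"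
proof (cases "pos i \<in> S")
  case True then show ?thesis by (simp add: ti_S)
next
  case nS: False
  have ki: "k \<noteq> i" using nS k by auto
  show ?thesis
  proof (cases "ech (pos i) = d")
    case True
    then obtain a where a: "dS S d (pos i) = Some a" "ti i = i - int a"
       "\<forall>b. dS S (opp d) (pos i) = Some b \<longrightarrow> a \<le> b" using ti_L[OF i nS] by blast
    have a0: "0 < a" using a Ld_iff by blast
    show ?thesis
    proof (cases "k < i")
      case True
      have "pos (i - int (nat (i - k))) \<in> S" using k True by simp
      then obtain a0 where "dS S d (pos i) = Some a0" "a0 \<le> nat (i - k)" using Ld_ex[of i "nat (i - k)"] True by auto
      then show ?thesis using a a0 True by auto
    next
      case False
      then have "pos (i + int (nat (k - i))) \<in> S" using k by simp
      then obtain b0 where "dS S (opp d) (pos i) = Some b0" "b0 \<le> nat (k - i)" using Rd_ex[of i "nat (k - i)"] False ki by auto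
      then show ?thesis using a a0 False by force
    qed
  next
    case False
    then obtain a where a: "dS S (opp d) (pos i) = Some a" "ti i = i + int a"
       "\<forall>b. dS S d (pos i) = Some b \<longrightarrow> a \<le> b" using ti_R[OF i nS] by blast
    have a0: "0 < a" using a Rd_iff by blast
    show ?thesis
    proof (cases "k < i")
      case True
      have "pos (i - int (nat (i - k))) \<in> S" using k True by simp
      then obtain b0 where "dS S d (pos i) = Some b0" "b0 \<le> nat (i - k)" using Ld_ex[of i "nat (i - k)"] True by auto
      then show ?thesis using a a0 True by force
    next
      case False
      then have "pos (i + int (nat (k - i))) \<in> S" using k by simp
      then obtain a0 where "dS S (opp d) (pos i) = Some a0" "a0 \<le> nat (k - i)" using Rd_ex[of i "nat (k - i)"] False ki by auto
      then show ?thesis using a a0 False by auto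
    qed
  qed
qed

lemma ti_conv:
  assumes i: "0 \<le> i" "i < int n" and m: "(ti i \<le> m \<and> m \<le> i) \<or> (i \<le> m \<and> m \<le> ti i)"
  shows "ti m = ti i"
proof (cases "pos i \<in> S")
  case True
  then have "ti i = i" by (rule ti_S)
  with m have "m = i" by auto
  then show ?thesis by simp
next
  case nS: False
  show ?thesis
  proof (cases "ech (pos i) = d")
    case True
    then obtain a where a: "dS S d (pos i) = Some a" "ti i = i - int a" "pr (pos i) = Some (opp d)"
      using ti_L[OF i nS] by blast
    have a0: "0 < a" "pos (i - int a) \<in> S" using a Ld_iff by blast+
    have m2: "i - int a \<le> m" "m \<le> i" using m a a0 by auto
    show ?thesis
    proof (cases "m = i - int a")
      case True then show ?thesis using a a0 by (simp add: ti_S)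
    next
      case False
      then have "i - int a < m" using m2 by simp
      then have h: "pos m \<notin> S \<and> pr (pos m) = Some (opp d) \<and> dS S d (pos m) = Some (a - nat (i - m))"
        using T4d[OF i nS a(3) a(1)] m2 by blast
      then have em: "ech (pos m) = d" by (simp add: ech_def)
      have "ti m = m - int (a - nat (i - m))" using h em by (simp add: ti_def)
      then show ?thesis using a \<open>i - int a < m\<close> m2 by simp
    qed
  next
    case False
    then obtain a where a: "dS S (opp d) (pos i) = Some a" "ti i = i + int a" "pr (pos i) = Some d"
      using ti_R[OF i nS] by blast
    have a0: "0 < a" "pos (i + int a) \<in> S" using a Rd_iff by blast+
    have m2: "i \<le> m" "m \<le> i + int a" using m a a0 by auto
    show ?thesis
    proof (cases "m = i + int a")
      case True then show ?thesis using a a0 by (simp add: ti_S)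
    next
      case False
      then have "m < i + int a" using m2 by simp
      then have h: "pos m \<notin> S \<and> pr (pos m) = Some d \<and> dS S (opp d) (pos m) = Some (a - nat (m - i))"
        using T4od[OF i nS a(3) a(1)] m2 by blast
      then have em: "ech (pos m) \<noteq> d" by (simp add: ech_def)
      have "ti m = m + int (a - nat (m - i))" using h em by (simp add: ti_def)
      then show ?thesis using a \<open>m < i + int a\<close> m2 by simp
    qed
  qed
qed

end

context lf
begin

definition Vt :: "node \<Rightarrow> node set" where
  "Vt s = {pos i | i. 0 \<le> i \<and> i < int n \<and> pos (ti i) = s}"
definition Ft :: "node \<Rightarrow> node set set" where
  "Ft s = {{pos i, pos (i+1)} | i. 0 \<le> i \<and> i + 1 < int n \<and> pos (ti i) = s \<and> pos (ti (i+1)) = s}"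

definition Wk :: "int \<Rightarrow> int set" where
  "Wk k = {i. 0 \<le> i \<and> i < int n \<and> ti i = k}"

lemma Vt_W: "Vt (pos k) = pos ` Wk k"
  unfolding Vt_def Wk_def by auto

lemma Ft_W: "Ft (pos k) = {{pos i, pos (i+1)} | i. i \<in> Wk k \<and> i + 1 \<in> Wk k}"
  unfolding Ft_def Wk_def by fastforce

lemma W_conv: "\<forall>i j m. i \<in> Wk k \<longrightarrow> j \<in> Wk k \<longrightarrow> i \<le> m \<longrightarrow> m \<le> j \<longrightarrow> m \<in> Wk k"
proof (intro allI impI)
  fix i j m assume i: "i \<in> Wk k" and j: "j \<in> Wk k" and m: "i \<le> m" "m \<le> j"
  have ii: "0 \<le> i" "i < int n" "ti i = k" using i by (auto simp: Wk_def)
  have jj: "0 \<le> j" "j < int n" "ti j = k" using j by (auto simp: Wk_def)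
  have "ti m = k"
  proof (cases "m \<le> k")
    case True
    then show ?thesis using ti_conv[OF ii(1,2), of m] ii m by auto
  next
    case False
    then show ?thesis using ti_conv[OF jj(1,2), of m] jj m by auto
  qed
  then show "m \<in> Wk k" using ii jj m by (auto simp: Wk_def)
qed

lemma tp: "a \<in> Wk k \<Longrightarrow> b \<in> Wk k \<Longrightarrow> tpath (Ft (pos k)) (pos a) (pos b) xs \<longleftrightarrow> xs = map pos (ilist a b)"
  using tpath_iff[OF W_conv Ft_W] by blast

lemma spf_main: "computes_spf X S pr"
  unfolding computes_spf_def
proof (intro exI conjI)
  have sk: "\<exists>k. s = pos k \<and> 0 \<le> k \<and> k < int n \<and> ti k = k \<and> k \<in> Wk k" if "s \<in> S" for s
  proof -
    have sX: "s \<in> X" using that SX by blast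
    obtain k where k: "s = pos k" "0 \<le> k" "k < int n" using X_ex[OF sX] by blast
    then have "ti k = k" using that ti_S by simp
    then show ?thesis using k by (auto simp: Wk_def)
  qed
  have inV: "u \<in> Vt (pos k) \<Longrightarrow> \<exists>i. u = pos i \<and> i \<in> Wk k" for u k
    unfolding Vt_W by blast
  show "spf X S Vt Ft"
    unfolding spf_def
  proof (intro conjI ballI impI allI)
    fix s assume s: "s \<in> S"
    obtain k where k: "s = pos k" "0 \<le> k" "k < int n" "ti k = k" "k \<in> Wk k" using sk[OF s] by blast
    show "is_tree (Vt s) (Ft s)"
      unfolding is_tree_def
    proof (intro conjI ballI)
      show "Vt s \<noteq> {}" using k Vt_W by auto
    next
      fix e assume "e \<in> Ft s"
      then obtain i where i: "e = {pos i, pos (i+1)}" "i \<in> Wk k" "i + 1 \<in> Wk k" using k Ft_W by auto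
      then show "\<exists>a b. e = {a, b} \<and> a \<noteq> b \<and> a \<in> Vt s \<and> b \<in> Vt s"
        using k by (intro exI[of _ "pos i"] exI[of _ "pos (i+1)"]) (auto simp: Vt_W)
    next
      fix u v assume u: "u \<in> Vt s" and v: "v \<in> Vt s"
      obtain a where a: "u = pos a" "a \<in> Wk k" using inV u k by blast
      obtain b where b: "v = pos b" "b \<in> Wk k" using inV v k by blast
      show "\<exists>!xs. tpath (Ft s) u v xs" using tp[OF a(2) b(2)] a b k by auto
    qed
    show "s \<in> Vt s" using k Vt_W by auto
    show "Vt s \<subseteq> X" using k Vt_W by (auto simp: Wk_def pos_in_X)
    show "Ft s \<subseteq> edgesX X"
    proof
      fix e assume "e \<in> Ft s"
      then obtain i where i: "e = {pos i, pos (i+1)}" "i \<in> Wk k" "i + 1 \<in> Wk k" using k Ft_W by auto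
      have "pos i \<in> X" "pos (i + 1) \<in> X" using i by (auto simp: Wk_def pos_in_X)
      moreover have "grid_adj (pos i) (pos (i+1))" unfolding grid_adj_def using mv_d by metis
      ultimately have "{pos i, pos (i+1)} \<in> edgesX X" unfolding edgesX_def by blast
      then show "e \<in> edgesX X" using i(1) by simp
    qed
  next
    fix s s' assume s: "s \<in> S" and s': "s' \<in> S" and ne: "s \<noteq> s'"
    show "Vt s \<inter> Vt s' = {}" using ne by (auto simp: Vt_def)
  next
    show "(\<Union>s\<in>S. Vt s) = X"
    proof
      show "(\<Union>s\<in>S. Vt s) \<subseteq> X" by (auto simp: Vt_def pos_in_X)
    next
      show "X \<subseteq> (\<Union>s\<in>S. Vt s)"
      proof
        fix x assume "x \<in> X"
        then obtain i where i: "x = pos i" "0 \<le> i" "i < int n" using X_ex by blast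
        then have "x \<in> Vt (pos (ti i))" "pos (ti i) \<in> S" using ti_in[OF i(2,3)] by (auto simp: Vt_def)
        then show "x \<in> (\<Union>s\<in>S. Vt s)" by blast
      qed
    qed
  next
    fix s u xs assume s: "s \<in> S" and u: "u \<in> Vt s" and t: "tpath (Ft s) s u xs"
    obtain k where k: "s = pos k" "0 \<le> k" "k < int n" "ti k = k" "k \<in> Wk k" using sk[OF s] by blast
    obtain i where i: "u = pos i" "i \<in> Wk k" using inV u k by blast
    have "xs = map pos (ilist k i)" using tp[OF k(5) i(2)] t k i by simp
    then show "length xs = Suc (gdist X s u)"
      using gdist_pos[of k i] k i by (simp add: length_ilist Wk_def)
  next
    fix s u s' assume s: "s \<in> S" and u: "u \<in> Vt s" and s': "s' \<in> S"
    obtain k where k: "s = pos k" "0 \<le> k" "k < int n" "ti k = k" "k \<in> Wk k" using sk[OF s] by blast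
    obtain k' where k': "s' = pos k'" "0 \<le> k'" "k' < int n" using sk[OF s'] by blast
    obtain i where i: "u = pos i" "i \<in> Wk k" using inV u k by blast
    have ii: "0 \<le> i" "i < int n" "ti i = k" using i by (auto simp: Wk_def)
    have "\<bar>ti i - i\<bar> \<le> \<bar>k' - i\<bar>" using ti_close[OF ii(1,2)] s' k' by blast
    then have "nat \<bar>k - i\<bar> \<le> nat \<bar>k' - i\<bar>" using ii(3) nat_mono by simp
    then show "gdist X s u \<le> gdist X s' u"
      using gdist_pos[of k i] gdist_pos[of k' i] k k' ii i by simp
  qed
  show "\<forall>s\<in>S. \<forall>u\<in>Vt s - S. \<exists>d' ys. pr u = Some d' \<and> tpath (Ft s) s u (ys @ [mv u d', u])"
  proof (intro ballI)
    fix s u assume s: "s \<in> S" and u: "u \<in> Vt s - S"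
    obtain k where k: "s = pos k" "0 \<le> k" "k < int n" "ti k = k" "k \<in> Wk k" using sk[OF s] by blast
    obtain i where i: "u = pos i" "i \<in> Wk k" using inV u k by blast
    have ii: "0 \<le> i" "i < int n" "ti i = k" "pos i \<notin> S" using i u by (auto simp: Wk_def)
    have tpi: "tpath (Ft s) s u (map pos (ilist k i))" using tp[OF k(5) i(2)] k i by simp
    show "\<exists>d' ys. pr u = Some d' \<and> tpath (Ft s) s u (ys @ [mv u d', u])"
    using ti_dir[OF ii(1,2,4)] proof
      assume h: "ti i < i \<and> pr (pos i) = Some (opp d)"
      then obtain zs where zs: "ilist k i = zs @ [i - 1, i]" using ilist_end_up ii by blast
      show ?thesis
        using tpi h i zs by (intro exI[of _ "opp d"] exI[of _ "map pos zs"]) (simp add: mv_od)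
    next
      assume h: "i < ti i \<and> pr (pos i) = Some d"
      then obtain zs where zs: "ilist k i = zs @ [i + 1, i]" using ilist_end_down ii by blast
      show ?thesis
        using tpi h i zs by (intro exI[of _ d] exI[of _ "map pos zs"]) (simp add: mv_d)
    qed
  qed
qed

end

lemma par_Est:
  assumes u: "u \<notin> S" and t: "0 < t" and bd: "\<forall>e a. dS S e u = Some a \<longrightarrow> a < 2^t"
    and ex: "\<exists>e a. dS S e u = Some a"
  shows "\<exists>e a. par (Est S t u) = Some (opp e) \<and> dS S e u = Some a \<and> (\<forall>b. dS S (opp e) u = Some b \<longrightarrow> a \<le> b)"
proof -
  define s where "s = Est S t u"
  have H: "stH s e = (dS S e u \<noteq> None)" for e using u t by (simp add: s_def Est_def)
  have Cc: "dS S e u = Some a \<Longrightarrow> dS S (opp e) u = Some b \<Longrightarrow> stC s e = (a \<le> b)" for e a b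
    using u bd by (simp add: s_def Est_def)
  define Q where "Q e = (stH s e \<and> (\<not> stH s (opp e) \<or> stC s e))" for e
  obtain e0 a0 where e0: "dS S e0 u = Some a0" using ex by blast
  have "\<exists>e. Q e"
  proof (cases "dS S (opp e0) u")
    case None then show ?thesis using e0 H by (auto simp: Q_def)
  next
    case (Some b0)
    show ?thesis
    proof (cases "a0 \<le> b0")
      case True then show ?thesis using e0 Some H Cc by (auto simp: Q_def)
    next
      case False
      then have "Q (opp e0)" using e0 Some H Cc[of "opp e0" b0 a0] by (auto simp: Q_def)
      then show ?thesis by blast
    qed
  qed
  then obtain e1 where "Q e1" by blast
  moreover have "e1 \<in> set dl" by (cases e1) (auto simp: dl_def)
  ultimately have "find Q dl \<noteq> None" by (auto simp: find_None_iff)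
  then obtain e where fe: "find Q dl = Some e" by blast
  then have Qe: "Q e" by (auto simp: find_Some_iff)
  have ps: "par s = Some (opp e)" using fe u unfolding par_def s_def Q_def by (simp add: Est_S)
  obtain a where a: "dS S e u = Some a" using Qe H by (auto simp: Q_def)
  have "\<forall>b. dS S (opp e) u = Some b \<longrightarrow> a \<le> b" using Qe H Cc a by (auto simp: Q_def)
  then show ?thesis using ps a unfolding s_def by blast
qed

theorem mainTheorem10:
  shows "\<exists>A C. valid_alg A \<and>
    (\<forall>X S n. amoebot_structure X \<and> is_line X n \<and> S \<subseteq> X \<and> S \<noteq> {} \<longrightarrow>
       (\<exists>t. real t \<le> C * (1 + log 2 (real n)) \<and>
            (\<forall>t'\<ge>t. computes_spf X S (\<lambda>u. parent A (run A X S t' u)))))"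
proof (intro exI[of _ ALG] exI[of _ "1::real"] conjI allI impI)
  show "valid_alg ALG" by (rule valid_ALG)
next
  fix X S n assume h: "amoebot_structure X \<and> is_line X n \<and> S \<subseteq> X \<and> S \<noteq> {}"
  then have SX: "S \<subseteq> X" and Sne: "S \<noteq> {}" and n1: "n \<ge> 1" by (auto simp: is_line_def)
  have "is_line X n" using h by blast
  then obtain p d where Xd: "X = {(fst p + int k * fst (dvec d), snd p + int k * snd (dvec d)) | k. k < n}"
    unfolding is_line_def by blast
  interpret L0: lf0 p d n X S using Xd SX by unfold_locales
  define T where "T = (LEAST T. n < 2^T)"
  have exT: "\<exists>T. n < 2^T" using less_exp by blast
  have nT: "n < 2^T" unfolding T_def using LeastI_ex[OF exT] .
  have T0: "0 < T" using nT n1 by (cases T) auto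
  have "2^(T-1) \<le> n" using not_less_Least[of "T - 1" "\<lambda>T. n < 2^T"] T0 unfolding T_def[symmetric] by auto
  then have l2: "(2::real)^(T-1) \<le> real n" by (metis of_nat_le_iff of_nat_numeral of_nat_power)
  have l1: "log 2 ((2::real)^(T-1)) = real (T-1)" by (simp add: log_nat_power)
  have "log 2 ((2::real)^(T-1)) \<le> log 2 (real n)" using l2 n1 by (subst log_le_cancel_iff) auto
  then have "real (T - 1) \<le> log 2 (real n)" using l1 by simp
  then have Tle: "real T \<le> 1 * (1 + log 2 (real n))" using T0 by simp
  show "\<exists>t. real t \<le> 1 * (1 + log 2 (real n)) \<and> (\<forall>t'\<ge>t. computes_spf X S (\<lambda>u. parent ALG (run ALG X S t' u)))"
  proof (intro exI[of _ T] conjI allI impI)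
    show "real T \<le> 1 * (1 + log 2 (real n))" by (rule Tle)
  next
    fix t' assume tT: "T \<le> t'"
    define pr where "pr = (\<lambda>u. parent ALG (run ALG X S t' u))"
    have run: "\<forall>u\<in>X. run ALG X S t' u = Est S t' u"
      using run_Est[OF SX] L0.convex_all by blast
    have p2: "(2::nat)^T \<le> 2^t'" using tT by (simp add: power_increasing)
    have PR: "\<forall>u\<in>X - S. \<exists>e a. pr u = Some (opp e) \<and> dS S e u = Some a \<and> (\<forall>b. dS S (opp e) u = Some b \<longrightarrow> a \<le> b)"
    proof
      fix u assume u: "u \<in> X - S"
      have bd: "\<forall>e a. dS S e u = Some a \<longrightarrow> a < 2^t'"
        using L0.dist_bound u nT p2 by (meson DiffD1 less_trans order_less_le_trans)
      have ex: "\<exists>e a. dS S e u = Some a" using L0.dS_exists u Sne by blast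
      have "pr u = par (Est S t' u)" using run u by (simp add: pr_def)
      then show "\<exists>e a. pr u = Some (opp e) \<and> dS S e u = Some a \<and> (\<forall>b. dS S (opp e) u = Some b \<longrightarrow> a \<le> b)"
        using par_Est[of u S t'] u T0 tT bd ex by simp
    qed
    interpret L: lf p d n X S pr using Xd SX PR by unfold_locales
    show "computes_spf X S (\<lambda>u. parent ALG (run ALG X S t' u))" using L.spf_main unfolding pr_def .
  qed
qed

end
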